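(* For parameters $(x_1,x_2,\xi_1,\xi_2)\in\mathbb{R}^{4n}$ consider the first-order differential operator on $L^2(\mathbb{R}_t)$ $$\tilde P=iD_t+a(t,\xi_2,\xi_1+t\xi_2)F(x_2-tx_1).$$ There exists a constant $C>0$ such that for all $u\in\mathscr S(\mathbb{R}_t)$ and all $(x_1,x_2,\xi_1,\xi_2)\in\mathbb{R}^{4n}$, $$\big\|(1+\langle x_1\rangle^{\frac{2\sigma}{2\sigma+1}}+\langle x_2-tx_1\rangle^{2\sigma})u\big\|_{L^2(\mathbb{R}_t)}\le C\big(\|\tilde Pu\|_{L^2(\mathbb{R}_t)}+\|u\|_{L^2(\mathbb{R}_t)}\big).$$
   Context: $0<\sigma<1$, $n\ge1$. $a\in C_b^\infty(\mathbb{R}^{2n+1})$ (smooth, all derivatives bounded) with $a(t,\xi,\eta)\ge a_0>0$ for all $(t,\xi,\eta)\in\mathbb{R}\times\mathbb{R}^n\times\mathbb{R}^n$. $w\in C^\infty(\mathbb{R}^n)$ with $0\le w\le1$, $w=1$ on $\{|\eta|\ge2\}$, $w=0$ on $\{|\eta|\le1\}$, and $F(x)=|x|^{2\sigma}w(x)+|x|^2(1-w(x))$. $D_t=(2\pi i)^{-1}\partial_t$, $\langle x\rangle=(1+|x|^2)^{1/2}$. In the estimate, $\langle x_2-tx_1\rangle^{2\sigma}$ acts as multiplication by a function of $t$. *)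

theory Defs
  imports "HOL-Analysis.Analysis"
begin

fun iter_dderiv :: "('a::real_normed_vector \<Rightarrow> 'b::real_normed_vector) \<Rightarrow> 'a list \<Rightarrow> 'a \<Rightarrow> 'b" where
  "iter_dderiv f [] = f"
| "iter_dderiv f (v # vs) = (\<lambda>x. frechet_derivative (iter_dderiv f vs) (at x) v)"

definition smooth_fun :: "('a::euclidean_space \<Rightarrow> 'b::real_normed_vector) \<Rightarrow> bool" where
  "smooth_fun f \<longleftrightarrow> (\<forall>vs. set vs \<subseteq> Basis \<longrightarrow> (\<forall>x. iter_dderiv f vs differentiable (at x)))"

definition Cb_inf :: "('a::euclidean_space \<Rightarrow> 'b::real_normed_vector) \<Rightarrow> bool" where
  "Cb_inf f \<longleftrightarrow> smooth_fun f \<and> (\<forall>vs. set vs \<subseteq> Basis \<longrightarrow> bounded (range (iter_dderiv f vs)))"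

definition vderiv :: "(real \<Rightarrow> complex) \<Rightarrow> real \<Rightarrow> complex" where
  "vderiv u = (\<lambda>t. vector_derivative u (at t))"

definition schwartz :: "(real \<Rightarrow> complex) \<Rightarrow> bool" where
  "schwartz u \<longleftrightarrow> (\<forall>k t. ((vderiv ^^ k) u) differentiable (at t)) \<and>
     (\<forall>k m. bounded (range (\<lambda>t::real. of_real (\<bar>t\<bar> ^ m) * (vderiv ^^ k) u t)))"

definition L2norm :: "(real \<Rightarrow> complex) \<Rightarrow> real" where
  "L2norm f = sqrt (integral\<^sup>L lborel (\<lambda>t. (cmod (f t))\<^sup>2))"

definition jbr :: "'a::real_normed_vector \<Rightarrow> real" where
  "jbr x = sqrt (1 + (norm x)\<^sup>2)"

definition Ffun :: "real \<Rightarrow> (real^'n \<Rightarrow> real) \<Rightarrow> real^'n \<Rightarrow> real" where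
  "Ffun \<sigma> w x = norm x powr (2*\<sigma>) * w x + (norm x)\<^sup>2 * (1 - w x)"

text \<open>D_t = (2 pi i)^{-1} d/dt; the operator P~ = i D_t + a(t,xi2,xi1+t xi2) F(x2 - t x1).\<close>
definition Ptilde :: "real \<Rightarrow> (real \<Rightarrow> real^'n \<Rightarrow> real^'n \<Rightarrow> real) \<Rightarrow> (real^'n \<Rightarrow> real)
    \<Rightarrow> real^'n \<Rightarrow> real^'n \<Rightarrow> real^'n \<Rightarrow> real^'n \<Rightarrow> (real \<Rightarrow> complex) \<Rightarrow> real \<Rightarrow> complex" where
  "Ptilde \<sigma> a w x1 x2 \<xi>1 \<xi>2 u t =
     \<i> * (vderiv u t / (2 * complex_of_real pi * \<i>))
     + complex_of_real (a t \<xi>2 (\<xi>1 + t *\<^sub>R \<xi>2) * Ffun \<sigma> w (x2 - t *\<^sub>R x1)) * u t"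

end

theory Submission
  imports Defs "HOL-Real_Asymp.Real_Asymp"
begin


lemma integrable_inv_sq: "integrable lborel (\<lambda>x::real. inverse (1 + x^2))"
proof -
  have "set_integrable lborel (einterval (-\<infinity>) \<infinity>) (\<lambda>x::real. inverse (1 + x^2))"
  proof (rule interval_integral_FTC_nonneg(1)[where F=arctan and A="-pi/2" and B="pi/2"])
    show "\<And>x. DERIV arctan x :> inverse (1 + x\<^sup>2)"
      by (auto intro!: derivative_eq_intros simp: field_simps)
    show "\<And>x. isCont (\<lambda>x::real. inverse (1 + x\<^sup>2)) x"
      by (intro continuous_intros) (auto simp: add_nonneg_eq_0_iff)
    show "((arctan \<circ> real_of_ereal) \<longlongrightarrow> - pi / 2) (at_right (- \<infinity>))"
      unfolding ereal_tendsto_simps using tendsto_arctan_at_bot by simp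
    show "((arctan \<circ> real_of_ereal) \<longlongrightarrow> pi / 2) (at_left \<infinity>)"
      unfolding ereal_tendsto_simps using tendsto_arctan_at_top by simp
  qed auto
  then show ?thesis by (simp add: set_integrable_def)
qed

lemma integrable_bounded_by:
  fixes f :: "real \<Rightarrow> real"
  assumes "continuous_on UNIV f" "\<And>t. \<bar>f t\<bar> \<le> K * inverse (1 + t^2)"
  shows "integrable lborel f"
proof (rule Bochner_Integration.integrable_bound[OF integrable_mult_right[OF integrable_inv_sq, of K]])
  show "f \<in> borel_measurable lborel" using assms(1) borel_measurable_continuous_onI by simp
  show "AE x in lborel. norm (f x) \<le> norm (K * inverse (1 + x\<^sup>2))"
    using assms(2) by (auto intro!: AE_I2 order.trans[OF _ abs_ge_self])
qed



lemma onept: "0 < 1 + (t::real)^2"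
  using zero_le_power2[of t] by linarith

lemma bounded_range_bound:
  assumes "bounded (range f)" shows "\<exists>B. \<forall>t. norm (f t) \<le> B"
  using assms by (auto simp: bounded_iff)

lemma schwartz_facts:
  assumes "schwartz u"
  shows "\<And>t. (u has_vector_derivative vderiv u t) (at t)"
    and "continuous_on UNIV u" and "continuous_on UNIV (vderiv u)"
    and "\<exists>M\<ge>0. \<forall>t. cmod (u t) \<le> M * inverse ((1 + t^2)^2) \<and> cmod (vderiv u t) \<le> M * inverse ((1 + t^2)^2)"
proof -
  have d0: "\<And>t. u differentiable (at t)" and d1: "\<And>t. vderiv u differentiable (at t)"
  proof -
    have "\<forall>k t. ((vderiv ^^ k) u) differentiable (at t)" using assms unfolding schwartz_def by blast
    from this[rule_format, of 0] this[rule_format, of 1]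
    show "\<And>t. u differentiable (at t)" "\<And>t. vderiv u differentiable (at t)" by auto
  qed
  show "\<And>t. (u has_vector_derivative vderiv u t) (at t)"
    using d0 by (simp add: vderiv_def vector_derivative_works[symmetric])
  show "continuous_on UNIV u"
    using d0 by (simp add: continuous_at_imp_continuous_on differentiable_imp_continuous_within)
  show "continuous_on UNIV (vderiv u)"
    using d1 by (simp add: continuous_at_imp_continuous_on differentiable_imp_continuous_within)
  have bd: "\<exists>B. \<forall>t. \<bar>t\<bar>^m * cmod ((vderiv ^^ k) u t) \<le> B" for k m
  proof -
    obtain B where "\<forall>t. norm (of_real (\<bar>t\<bar>^m) * (vderiv ^^ k) u t) \<le> B"
      using assms unfolding schwartz_def by (meson bounded_range_bound)
    then show ?thesis by (auto simp: norm_mult norm_power)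
  qed
  have dec: "\<exists>M. \<forall>t. cmod ((vderiv ^^ k) u t) \<le> M * inverse ((1 + t^2)^2)" for k
  proof -
    obtain B0 where B0: "\<forall>t. \<bar>t\<bar>^0 * cmod ((vderiv ^^ k) u t) \<le> B0" using bd by blast
    obtain B4 where B4: "\<forall>t. \<bar>t\<bar>^4 * cmod ((vderiv ^^ k) u t) \<le> B4" using bd by blast
    have "cmod ((vderiv ^^ k) u t) \<le> (2*B0 + 2*B4) * inverse ((1 + t^2)^2)" for t
    proof -
      let ?z = "cmod ((vderiv ^^ k) u t)"
      have p: "(1 + t^2)^2 > 0" using onept[of t] by simp
      have a4: "\<bar>t\<bar>^4 = (t^2)^2" by (simp add: power_even_abs_numeral flip: power_mult)
      have "(1 + t^2)^2 \<le> 2 + 2 * \<bar>t\<bar>^4"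
        unfolding a4 using zero_le_power2[of "t^2 - 1"] by (simp add: power2_eq_square algebra_simps)
      hence "(1 + t^2)^2 * ?z \<le> (2 + 2 * \<bar>t\<bar>^4) * ?z" by (simp add: mult_right_mono)
      also have "\<dots> = 2 * (\<bar>t\<bar>^0 * ?z) + 2 * (\<bar>t\<bar>^4 * ?z)" by (simp add: algebra_simps)
      also have "\<dots> \<le> 2*B0 + 2*B4" using B0[rule_format, of t] B4[rule_format, of t] by linarith
      finally show ?thesis using p by (simp add: field_simps)
    qed
    then show ?thesis by blast
  qed
  obtain M0 where M0: "\<forall>t. cmod (u t) \<le> M0 * inverse ((1 + t^2)^2)" using dec[of 0] by auto
  obtain M1 where M1: "\<forall>t. cmod (vderiv u t) \<le> M1 * inverse ((1 + t^2)^2)" using dec[of 1] by auto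
  show "\<exists>M\<ge>0. \<forall>t. cmod (u t) \<le> M * inverse ((1 + t^2)^2) \<and> cmod (vderiv u t) \<le> M * inverse ((1 + t^2)^2)"
  proof (intro exI[of _ "max 0 (max M0 M1)"] conjI allI)
    fix t
    have i: "inverse ((1 + t^2)^2) \<ge> (0::real)" using onept[of t] by simp
    show "cmod (u t) \<le> max 0 (max M0 M1) * inverse ((1 + t^2)^2)"
    proof -
      have "M0 \<le> max 0 (max M0 M1)" by linarith
      from mult_right_mono[OF this i] M0[rule_format, of t] show ?thesis by linarith
    qed
    show "cmod (vderiv u t) \<le> max 0 (max M0 M1) * inverse ((1 + t^2)^2)"
    proof -
      have "M1 \<le> max 0 (max M0 M1)" by linarith
      from mult_right_mono[OF this i] M1[rule_format, of t] show ?thesis by linarith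
    qed
  qed simp
qed



lemma energy:
  fixes u :: "real \<Rightarrow> complex" and \<phi> \<phi>' :: "real \<Rightarrow> real"
  assumes su: "schwartz u"
    and dphi: "\<And>t. (\<phi> has_real_derivative \<phi>' t) (at t)"
    and cphi': "continuous_on UNIV \<phi>'"
    and bphi: "\<And>t. \<bar>\<phi> t\<bar> \<le> K * (1 + t^2)" and bphi': "\<And>t. \<bar>\<phi>' t\<bar> \<le> K * (1 + t^2)"
  shows "integrable lborel (\<lambda>t. \<phi>' t * (cmod (u t))^2 + 2 * \<phi> t * (Re (u t) * Re (vderiv u t) + Im (u t) * Im (vderiv u t)))"
    "integral\<^sup>L lborel (\<lambda>t. \<phi>' t * (cmod (u t))^2 + 2 * \<phi> t * (Re (u t) * Re (vderiv u t) + Im (u t) * Im (vderiv u t))) = 0"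
proof -
  define D where "D = vderiv u"
  define E where "E = (\<lambda>t. \<phi>' t * (cmod (u t))^2 + 2 * \<phi> t * (Re (u t) * Re (D t) + Im (u t) * Im (D t)))"
  define H where "H = (\<lambda>t. \<phi> t * (Re (u t)^2 + Im (u t)^2))"
  have ud: "\<And>t. (u has_vector_derivative D t) (at t)" using schwartz_facts(1)[OF su] by (simp add: D_def)
  have cu: "continuous_on UNIV u" using schwartz_facts(2)[OF su] .
  have cD: "continuous_on UNIV D" using schwartz_facts(3)[OF su] by (simp add: D_def)
  obtain M where M0: "M \<ge> 0" and M: "\<And>t. cmod (u t) \<le> M * inverse ((1 + t^2)^2) \<and> cmod (D t) \<le> M * inverse ((1 + t^2)^2)"
    using schwartz_facts(4)[OF su] unfolding D_def by blast
  have K0: "K \<ge> 0" using bphi[of 0] by simp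
  have cphi: "continuous_on UNIV \<phi>"
    using dphi by (meson DERIV_isCont continuous_at_imp_continuous_on)
  have Hd: "(H has_real_derivative E t) (at t)" for t
    unfolding H_def E_def
    by (rule derivative_eq_intros dphi has_field_derivative_Re has_field_derivative_Im ud refl)+
       (simp add: cmod_power2 algebra_simps)
  have cE: "continuous_on UNIV E"
    unfolding E_def by (intro continuous_intros cphi cphi' cu cD)
  have bnd: "\<bar>E t\<bar> \<le> 5 * K * M^2 * inverse (1 + t^2)" for t
  proof -
    define p where "p = 1 + t^2"
    have p1: "p \<ge> 1" unfolding p_def by simp
    have cuu: "cmod (u t) \<le> M / p^2" and cdd: "cmod (D t) \<le> M / p^2" using M[of t] by (auto simp: p_def field_simps)
    have "\<bar>Re (u t) * Re (D t) + Im (u t) * Im (D t)\<bar> \<le> \<bar>Re (u t)\<bar> * \<bar>Re (D t)\<bar> + \<bar>Im (u t)\<bar> * \<bar>Im (D t)\<bar>"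
      by (simp add: abs_mult[symmetric])
    also have "\<dots> \<le> cmod (u t) * cmod (D t) + cmod (u t) * cmod (D t)"
      by (intro add_mono mult_mono abs_Re_le_cmod abs_Im_le_cmod) auto
    finally have cr: "\<bar>Re (u t) * Re (D t) + Im (u t) * Im (D t)\<bar> \<le> 2 * (cmod (u t) * cmod (D t))" by linarith
    have "\<bar>E t\<bar> \<le> \<bar>\<phi>' t\<bar> * (cmod (u t))^2 + 2 * \<bar>\<phi> t\<bar> * \<bar>Re (u t) * Re (D t) + Im (u t) * Im (D t)\<bar>"
      unfolding E_def using abs_triangle_ineq[of "\<phi>' t * (cmod (u t))^2" "2 * \<phi> t * (Re (u t) * Re (D t) + Im (u t) * Im (D t))"]
      by (simp add: abs_mult)
    also have "\<dots> \<le> (K * p) * (cmod (u t))^2 + 2 * (K * p) * (2 * (cmod (u t) * cmod (D t)))"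
      using bphi[of t] bphi'[of t] cr unfolding p_def
      by (intro add_mono mult_mono mult_left_mono) auto
    also have "\<dots> \<le> (K * p) * (M / p^2)^2 + 2 * (K * p) * (2 * ((M / p^2) * (M / p^2)))"
      using K0 M0 p1 cuu cdd
      by (intro add_mono mult_left_mono mult_mono power_mono) auto
    also have "\<dots> = 5 * K * M^2 / p^3" using p1 by (simp add: field_simps power2_eq_square power3_eq_cube)
    also have "\<dots> \<le> 5 * K * M^2 / p"
      using p1 K0 M0 by (intro divide_left_mono) (auto simp: power3_eq_cube intro!: mult_mono[of 1 _ 1, simplified] order.trans[OF p1])
    finally show ?thesis by (simp add: p_def divide_inverse)
  qed
  have Hb: "\<bar>H t\<bar> \<le> K * M^2 * inverse (1 + t^2)" for t
  proof -
    define p where "p = 1 + t^2"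
    have p1: "p \<ge> 1" unfolding p_def by simp
    have cuu: "cmod (u t) \<le> M / p^2" using M[of t] by (auto simp: p_def field_simps)
    have "\<bar>H t\<bar> = \<bar>\<phi> t\<bar> * (cmod (u t))^2" unfolding H_def by (simp add: cmod_power2 abs_mult)
    also have "\<dots> \<le> (K * p) * (M / p^2)^2"
      using bphi[of t] cuu K0 M0 p1 by (intro mult_mono power_mono) (auto simp: p_def)
    also have "\<dots> = K * M^2 / p^3" using p1 by (simp add: field_simps power2_eq_square power3_eq_cube)
    also have "\<dots> \<le> K * M^2 / p"
      using p1 K0 M0 by (intro divide_left_mono) (auto simp: power3_eq_cube intro!: mult_mono[of 1 _ 1, simplified] order.trans[OF p1])
    finally show ?thesis by (simp add: p_def divide_inverse)
  qed
  have lim0: "((\<lambda>t::real. K * M^2 * inverse (1 + t^2)) \<longlongrightarrow> 0) F" if "F = at_top \<or> F = at_bot" for F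
    using that by (elim disjE; simp; real_asymp)
  have Hlim: "(H \<longlongrightarrow> 0) F" if "F = at_top \<or> F = at_bot" for F
    by (rule Lim_null_comparison[OF _ lim0[OF that]]) (use Hb in auto)
  have intE: "integrable lborel E" by (rule integrable_bounded_by[OF cE bnd])
  have "(LBINT x=-\<infinity>..\<infinity>. E x) = 0 - 0"
  proof (rule interval_integral_FTC_integrable)
    show "\<And>x. (H has_vector_derivative E x) (at x)" using Hd by (simp add: has_real_derivative_iff_has_vector_derivative)
    show "\<And>x. isCont E x" using cE by (simp add: continuous_on_eq_continuous_at)
    show "set_integrable lborel (einterval (- \<infinity>) \<infinity>) E" using intE by (simp add: set_integrable_def)
    show "((H \<circ> real_of_ereal) \<longlongrightarrow> 0) (at_right (- \<infinity>))" unfolding ereal_tendsto_simps using Hlim by blast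
    show "((H \<circ> real_of_ereal) \<longlongrightarrow> 0) (at_left \<infinity>)" unfolding ereal_tendsto_simps using Hlim by blast
  qed auto
  then have "integral\<^sup>L lborel E = 0"
    by (simp add: interval_lebesgue_integral_def set_lebesgue_integral_def)
  with intE show "integrable lborel (\<lambda>t. \<phi>' t * (cmod (u t))^2 + 2 * \<phi> t * (Re (u t) * Re (vderiv u t) + Im (u t) * Im (vderiv u t)))"
    "integral\<^sup>L lborel (\<lambda>t. \<phi>' t * (cmod (u t))^2 + 2 * \<phi> t * (Re (u t) * Re (vderiv u t) + Im (u t) * Im (vderiv u t))) = 0"
    by (simp_all add: E_def D_def)
qed



lemma amgm:
  fixes a b c d \<epsilon> :: real
  assumes "\<epsilon> > 0"
  shows "2 * \<bar>a*c + b*d\<bar> \<le> \<epsilon> * (a^2 + b^2) + (c^2 + d^2) / \<epsilon>"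
proof -
  have e1: "\<epsilon> * (a^2 + b^2) + (c^2 + d^2) / \<epsilon> - 2 * (a*c + b*d) = ((\<epsilon>*a - c)^2 + (\<epsilon>*b - d)^2) / \<epsilon>"
    using assms by (simp add: field_simps power2_eq_square)
  have e2: "\<epsilon> * (a^2 + b^2) + (c^2 + d^2) / \<epsilon> + 2 * (a*c + b*d) = ((\<epsilon>*a + c)^2 + (\<epsilon>*b + d)^2) / \<epsilon>"
    using assms by (simp add: field_simps power2_eq_square)
  have "((\<epsilon>*a - c)^2 + (\<epsilon>*b - d)^2) / \<epsilon> \<ge> 0" "((\<epsilon>*a + c)^2 + (\<epsilon>*b + d)^2) / \<epsilon> \<ge> 0"
    using assms by auto
  with e1 e2 show ?thesis by (simp add: abs_if)
qed

lemma scalarB: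
  fixes c R U Hh J \<phi> \<phi>d b e :: real
  assumes c: "c > 0" and R: "R > 0" and U: "U \<ge> 0"
    and am: "\<And>\<epsilon>. \<epsilon> > 0 \<Longrightarrow> 2 * \<bar>J\<bar> \<le> \<epsilon> * U + Hh / \<epsilon>"
    and ph: "0 \<le> \<phi>" "\<phi> \<le> 4"
    and key: "- \<phi>d + 4 * pi * \<phi> * b \<ge> c * R"
    and e: "e = \<phi>d * U + 4 * pi * \<phi> * J - 4 * pi * \<phi> * b * U"
  shows "R^2 * U \<le> (256 * pi^2 / c^2) * Hh - (2 * R / c) * e"
proof -
  have "(c * R) * U \<le> (- \<phi>d + 4 * pi * \<phi> * b) * U" using key U by (rule mult_right_mono)
  moreover have "4 * pi * \<phi> * J \<le> 8 * pi * (2 * \<bar>J\<bar>)"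
  proof -
    have "4 * pi * \<phi> * J \<le> 4 * pi * \<phi> * \<bar>J\<bar>" using ph by (intro mult_left_mono) auto
    also have "\<dots> \<le> 4 * pi * 4 * \<bar>J\<bar>" using ph by (intro mult_right_mono mult_left_mono) auto
    finally show ?thesis by simp
  qed
  moreover have "2 * \<bar>J\<bar> \<le> (c * R / (16 * pi)) * U + Hh / (c * R / (16 * pi))"
    using c R by (intro am) auto
  ultimately have "(c * R) * U \<le> - e + 8 * pi * ((c * R / (16 * pi)) * U + Hh / (c * R / (16 * pi)))"
  proof -
    assume a1: "c * R * U \<le> (- \<phi>d + 4 * pi * \<phi> * b) * U" and a2: "4 * pi * \<phi> * J \<le> 8 * pi * (2 * \<bar>J\<bar>)"
      and a3: "2 * \<bar>J\<bar> \<le> c * R / (16 * pi) * U + Hh / (c * R / (16 * pi))"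
    have "8 * pi * (2 * \<bar>J\<bar>) \<le> 8 * pi * (c * R / (16 * pi) * U + Hh / (c * R / (16 * pi)))"
      using a3 by (intro mult_left_mono) auto
    moreover have "(- \<phi>d + 4 * pi * \<phi> * b) * U = - (\<phi>d * U + 4 * pi * \<phi> * J - 4 * pi * \<phi> * b * U) + 4 * pi * \<phi> * J"
      by (simp add: algebra_simps)
    ultimately show ?thesis using a1 a2 unfolding e by linarith
  qed
  also have "8 * pi * ((c * R / (16 * pi)) * U + Hh / (c * R / (16 * pi))) = (c*R/2) * U + 128 * pi^2 * Hh / (c * R)"
    using c R by (simp add: field_simps power2_eq_square)
  finally have "(c*R/2) * U \<le> - e + 128 * pi^2 * Hh / (c * R)" by simp
  hence "(2*R/c) * ((c*R/2) * U) \<le> (2*R/c) * (- e + 128 * pi^2 * Hh / (c * R))"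
    using c R by (intro mult_left_mono) auto
  moreover have "(2*R/c) * ((c*R/2) * U) = R^2 * U" using c R by (simp add: field_simps power2_eq_square)
  moreover have "(2*R/c) * (- e + 128 * pi^2 * Hh / (c * R)) = (256 * pi^2 / c^2) * Hh - (2 * R / c) * e"
    using c R by (simp add: field_simps power2_eq_square)
  ultimately show ?thesis by linarith
qed

lemma lin6:
  fixes A B Cc P Q H1 H2 X1 X2 Y1 Y2 L Rr e :: real
  assumes "L \<le> Rr" "X1 \<le> P + A" "X2 \<le> Y1 + Y2" "Y1 \<le> Q + H1" "Y2 \<le> A + H2" "B \<le> A + Cc"
    "Rr = X1 + X2 - e" "L = 4*A - B"
  shows "A \<le> Cc + (P + Q) + (H1 + H2) - e"
  using assms by linarith

lemma scalarC:
  fixes a0 \<kappa> U Hh V \<rho>2 \<phi> \<phi>d b J e :: real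
  assumes a0: "a0 > 0" and \<kappa>: "\<kappa> > 0" "18 / \<kappa> \<le> pi * a0 / 2" and U: "U \<ge> 0"
    and V: "V \<ge> 1" and \<rho>: "\<rho>2 > 0"
    and d: "\<bar>\<phi>d\<bar> \<le> (18 / \<kappa>) * (\<rho>2^2 + V^2)"
    and ph: "V \<le> \<phi>" "\<phi> \<le> 2 * (\<rho>2 + V)"
    and pb: "\<phi> * b \<ge> a0 * (V^2/2 - V)"
    and e: "e = \<phi>d * U + 4 * pi * \<phi> * J - 4 * pi * \<phi> * b * U"
    and am: "\<And>\<epsilon>. \<epsilon> > 0 \<Longrightarrow> 2 * \<bar>J\<bar> \<le> \<epsilon> * U + Hh / \<epsilon>"
  shows "(pi * a0 / 2) * V^2 * U \<le> 8 * pi * a0 * U + (pi * a0 / 2 + 4 * pi) * \<rho>2^2 * U + (4 * pi + 32 * pi / a0) * Hh - e"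
proof -
  have pi: "pi > 0" by simp
  have s1: "4 * pi * (a0 * (V^2/2 - V)) * U \<le> 4 * pi * (\<phi> * b) * U"
    using pb U by (intro mult_right_mono mult_left_mono) auto
  have s2: "\<phi>d * U \<le> (pi * a0 / 2) * (\<rho>2^2 + V^2) * U"
  proof -
    have "\<phi>d \<le> (pi * a0 / 2) * (\<rho>2^2 + V^2)"
    proof -
      have "(18 / \<kappa>) * (\<rho>2^2 + V^2) \<le> (pi * a0 / 2) * (\<rho>2^2 + V^2)"
        using \<kappa>(2) by (intro mult_right_mono) auto
      thus ?thesis using d by linarith
    qed
    thus ?thesis using U by (rule mult_right_mono)
  qed
  have j1: "2 * \<bar>J\<bar> \<le> \<rho>2 * U + Hh / \<rho>2" using am \<rho> by blast
  have j2: "2 * \<bar>J\<bar> \<le> (a0/8 * V) * U + Hh / (a0/8 * V)" using am a0 V by (intro am) auto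
  have s3: "4 * pi * \<phi> * J \<le> 4 * pi * \<rho>2 * (2 * \<bar>J\<bar>) + 4 * pi * V * (2 * \<bar>J\<bar>)"
  proof -
    have "\<phi> \<ge> 0" using ph V by linarith
    hence "4 * pi * \<phi> * J \<le> 4 * pi * \<phi> * \<bar>J\<bar>" by (intro mult_left_mono) auto
    also have "\<dots> \<le> 4 * pi * (2 * (\<rho>2 + V)) * \<bar>J\<bar>" using ph by (intro mult_right_mono mult_left_mono) auto
    finally show ?thesis by (simp add: algebra_simps)
  qed
  have s4: "4 * pi * \<rho>2 * (2 * \<bar>J\<bar>) \<le> 4 * pi * \<rho>2^2 * U + 4 * pi * Hh"
  proof -
    have "4 * pi * \<rho>2 * (2 * \<bar>J\<bar>) \<le> 4 * pi * \<rho>2 * (\<rho>2 * U + Hh / \<rho>2)"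
      using j1 \<rho> by (intro mult_left_mono) auto
    moreover have "4 * pi * \<rho>2 * (\<rho>2 * U + Hh / \<rho>2) = 4 * pi * \<rho>2^2 * U + 4 * pi * Hh"
      using \<rho> by (simp add: field_simps power2_eq_square)
    ultimately show ?thesis by linarith
  qed
  have s5: "4 * pi * V * (2 * \<bar>J\<bar>) \<le> (pi * a0 / 2) * V^2 * U + (32 * pi / a0) * Hh"
  proof -
    have "4 * pi * V * (2 * \<bar>J\<bar>) \<le> 4 * pi * V * ((a0/8 * V) * U + Hh / (a0/8 * V))"
      using j2 V by (intro mult_left_mono) auto
    moreover have "4 * pi * V * ((a0/8 * V) * U + Hh / (a0/8 * V)) = (pi * a0 / 2) * V^2 * U + (32 * pi / a0) * Hh"
      using V a0 by (simp add: field_simps power2_eq_square)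
    ultimately show ?thesis by linarith
  qed
  have s6: "4 * pi * a0 * V * U \<le> (pi * a0 / 2) * V^2 * U + 8 * pi * a0 * U"
  proof -
    have "4 * V \<le> V^2 / 2 + 8" using zero_le_power2[of "V - 4"] by (simp add: power2_eq_square algebra_simps)
    hence "(pi * a0 * U) * (4 * V) \<le> (pi * a0 * U) * (V^2 / 2 + 8)" using a0 U by (intro mult_left_mono) auto
    thus ?thesis by (simp add: algebra_simps)
  qed
  have eq: "4 * pi * (\<phi> * b) * U = \<phi>d * U + 4 * pi * \<phi> * J - e" using e by (simp add: algebra_simps)
  have e3: "4 * pi * (a0 * (V^2/2 - V)) * U = 4 * ((pi * a0 / 2) * V^2 * U) - 4 * pi * a0 * V * U" by (simp add: algebra_simps)
  have e4: "(pi * a0 / 2) * (\<rho>2^2 + V^2) * U = (pi * a0 / 2) * \<rho>2^2 * U + (pi * a0 / 2) * V^2 * U" by (simp add: algebra_simps)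
  have e5: "(pi * a0 / 2 + 4 * pi) * \<rho>2^2 * U = (pi * a0 / 2) * \<rho>2^2 * U + 4 * pi * \<rho>2^2 * U" by (simp add: algebra_simps)
  have e6: "(4 * pi + 32 * pi / a0) * Hh = 4 * pi * Hh + (32 * pi / a0) * Hh" by (simp add: algebra_simps)
  show ?thesis unfolding e5 e6
    by (rule lin6[OF s1 s2[unfolded e4] s3 s4 s5 s6 eq e3])
qed



lemma key_powr:
  fixes \<sigma> \<rho> Z :: real
  assumes s: "0 < \<sigma>" and r: "0 < \<rho>" and z: "\<rho>^2 \<le> Z"
  shows "\<rho> powr (2*\<sigma>+1) * Z powr (\<sigma> - 1/2) \<le> \<rho> powr (4*\<sigma>) + Z powr (2*\<sigma>)"
proof -
  have r2p: "0 < \<rho>^2" using r by simp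
  have Z0: "Z > 0" using r2p z by linarith
  have r2: "\<rho>^2 = \<rho> powr 2" using r by (simp add: powr_realpow)
  have nn: "0 \<le> \<rho> powr (4*\<sigma>)" "0 \<le> Z powr (2*\<sigma>)" by auto
  show ?thesis
  proof (cases "\<sigma> \<le> 1/2")
    case True
    have "Z powr (\<sigma> - 1/2) \<le> (\<rho>^2) powr (\<sigma> - 1/2)"
      by (rule powr_mono2') (use True r2p z in auto)
    also have "(\<rho>^2) powr (\<sigma> - 1/2) = \<rho> powr (2*\<sigma> - 1)" unfolding r2 powr_powr by (simp add: algebra_simps)
    finally have "\<rho> powr (2*\<sigma>+1) * Z powr (\<sigma> - 1/2) \<le> \<rho> powr (2*\<sigma>+1) * \<rho> powr (2*\<sigma> - 1)"
      by (rule mult_left_mono) simp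
    also have "\<rho> powr (2*\<sigma>+1) * \<rho> powr (2*\<sigma> - 1) = \<rho> powr (4*\<sigma>)"
      unfolding powr_add[symmetric] by (simp add: algebra_simps)
    finally show ?thesis using nn by linarith
  next
    case False
    have "\<rho> powr (2*\<sigma>+1) = (\<rho>^2) powr (\<sigma> + 1/2)" unfolding r2 powr_powr by (simp add: algebra_simps)
    also have "\<dots> \<le> Z powr (\<sigma> + 1/2)" by (rule powr_mono2) (use s r2p z in auto)
    finally have "\<rho> powr (2*\<sigma>+1) * Z powr (\<sigma> - 1/2) \<le> Z powr (\<sigma> + 1/2) * Z powr (\<sigma> - 1/2)"
      by (rule mult_right_mono) simp
    also have "Z powr (\<sigma> + 1/2) * Z powr (\<sigma> - 1/2) = Z powr (2*\<sigma>)"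
      unfolding powr_add[symmetric] by (simp add: algebra_simps)
    finally show ?thesis using nn by linarith
  qed
qed


lemma Ffun_props:
  fixes x :: "real^'n"
  assumes s: "0 < \<sigma>" "\<sigma> < 1" and w: "0 \<le> w x" "w x \<le> 1"
  shows "0 \<le> Ffun \<sigma> w x"
    and "1 \<le> norm x \<Longrightarrow> norm x powr (2*\<sigma>) \<le> Ffun \<sigma> w x"
    and "(1 + (norm x)^2) powr \<sigma> / 2 - 1 \<le> Ffun \<sigma> w x"
    and "Ffun \<sigma> w x \<le> 1 + (norm x)^2"
proof -
  define N where "N = norm x"
  have N0: "N \<ge> 0" unfolding N_def by simp
  have F: "Ffun \<sigma> w x = N powr (2*\<sigma>) * w x + N^2 * (1 - w x)" unfolding Ffun_def N_def by simp
  have p0: "N powr (2*\<sigma>) \<ge> 0" by simp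
  show F0: "0 \<le> Ffun \<sigma> w x" unfolding F using w p0 by (intro add_nonneg_nonneg mult_nonneg_nonneg) auto
  have big: "N powr (2*\<sigma>) \<le> N^2" if "1 \<le> N"
  proof -
    have "N powr (2*\<sigma>) \<le> N powr 2" by (rule powr_mono) (use s that in auto)
    thus ?thesis using that by (simp add: powr_realpow)
  qed
  have lo: "N powr (2*\<sigma>) \<le> Ffun \<sigma> w x" if "1 \<le> N"
  proof -
    have "N powr (2*\<sigma>) * (1 - w x) \<le> N^2 * (1 - w x)" using big[OF that] w by (intro mult_right_mono) auto
    thus ?thesis unfolding F by (simp add: algebra_simps)
  qed
  show "1 \<le> norm x \<Longrightarrow> norm x powr (2*\<sigma>) \<le> Ffun \<sigma> w x" using lo unfolding N_def by simp
  have two: "(2::real) powr \<sigma> \<le> 2"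
  proof -
    have "(2::real) powr \<sigma> \<le> 2 powr 1" by (rule powr_mono) (use s in auto)
    thus ?thesis by simp
  qed
  show "(1 + (norm x)^2) powr \<sigma> / 2 - 1 \<le> Ffun \<sigma> w x"
  proof (cases "1 \<le> N")
    case True
    have "(1 + N^2) powr \<sigma> \<le> (2 * N^2) powr \<sigma>" by (rule powr_mono2) (use s True in auto)
    also have "\<dots> = 2 powr \<sigma> * (N powr 2) powr \<sigma>" using True by (simp add: powr_mult powr_realpow)
    also have "\<dots> = 2 powr \<sigma> * N powr (2*\<sigma>)" by (simp add: powr_powr)
    also have "\<dots> \<le> 2 * N powr (2*\<sigma>)" using two by (intro mult_right_mono) auto
    finally show ?thesis using lo[OF True] unfolding N_def by linarith
  next
    case False
    have "(1 + N^2) powr \<sigma> \<le> 2 powr \<sigma>"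
    proof (rule powr_mono2)
      have "N^2 \<le> 1" using False N0 by (simp add: power_le_one)
      thus "1 + N^2 \<le> 2" by simp
    qed (use s in auto)
    thus ?thesis using two F0 unfolding N_def by linarith
  qed
  show "Ffun \<sigma> w x \<le> 1 + (norm x)^2"
  proof -
    have pb: "N powr (2*\<sigma>) \<le> 1 + N^2"
    proof (cases "1 \<le> N")
      case True thus ?thesis using big by force
    next
      case False
      have "N powr (2*\<sigma>) \<le> 1 powr (2*\<sigma>)" by (rule powr_mono2) (use N0 False s in auto)
      hence "N powr (2*\<sigma>) \<le> 1" by simp
      thus ?thesis by (smt (verit) zero_le_power2)
    qed
    have n2: "N^2 \<le> 1 + N^2" by simp
    have "N powr (2*\<sigma>) * w x + N^2 * (1 - w x) \<le> (1 + N^2) * w x + (1 + N^2) * (1 - w x)"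
      using pb n2 w by (intro add_mono mult_right_mono) auto
    thus ?thesis unfolding F N_def by (simp add: algebra_simps)
  qed
qed

lemma jbr_powr:
  fixes y :: "'a::real_normed_vector"
  shows "jbr y powr (2*\<sigma>) = (1 + (norm y)^2) powr \<sigma>"
proof -
  have p: "0 \<le> 1 + (norm y)^2" by (simp add: add_nonneg_nonneg)
  have "jbr y = (1 + (norm y)^2) powr (1/2)" unfolding jbr_def using p by (simp add: powr_half_sqrt)
  thus ?thesis by (simp add: powr_powr)
qed

lemma V_props:
  fixes N \<sigma> :: real
  assumes "0 < \<sigma>" "\<sigma> < 1"
  shows "1 \<le> (1 + N^2) powr \<sigma>" "(1 + N^2) powr \<sigma> \<le> 1 + N^2"
proof -
  have b: "1 \<le> 1 + N^2" by simp
  show "1 \<le> (1 + N^2) powr \<sigma>" using b assms by (simp add: ge_one_powr_ge_zero)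
  have "(1 + N^2) powr \<sigma> \<le> (1 + N^2) powr 1" by (rule powr_mono) (use b assms in auto)
  thus "(1 + N^2) powr \<sigma> \<le> 1 + N^2" using b by simp
qed

lemma normsq_expand:
  fixes x1 x2 :: "real^'n"
  shows "(norm (x2 - t *\<^sub>R x1))^2 = x2 \<bullet> x2 - 2 * t * (x1 \<bullet> x2) + t^2 * (x1 \<bullet> x1)"
  unfolding power2_norm_eq_inner by (simp add: inner_diff_left inner_diff_right inner_commute algebra_simps power2_eq_square)

lemma geom:
  fixes x1 x2 :: "real^'n"
  assumes "x1 \<noteq> 0"
  shows "(norm x1)^2 * (t - (x1 \<bullet> x2) / (x1 \<bullet> x1))^2 \<le> (norm (x2 - t *\<^sub>R x1))^2"
proof -
  define n m k where "n = x1 \<bullet> x1" and "m = x1 \<bullet> x2" and "k = x2 \<bullet> x2"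
  have n0: "n > 0" using assms unfolding n_def by simp
  have cs: "m^2 \<le> n * k" unfolding n_def m_def k_def using Cauchy_Schwarz_ineq[of x1 x2] by simp
  have nx: "(norm x1)^2 = n" unfolding n_def by (simp add: power2_norm_eq_inner)
  have "(norm (x2 - t *\<^sub>R x1))^2 - (norm x1)^2 * (t - m / n)^2 = k - m^2 / n"
    unfolding normsq_expand nx using n0 unfolding n_def[symmetric] m_def[symmetric] k_def[symmetric]
    by (simp add: field_simps power2_eq_square)
  moreover have "k - m^2 / n \<ge> 0" using cs n0 by (simp add: field_simps)
  ultimately show ?thesis unfolding m_def n_def by linarith
qed



locale fx =
  fixes \<sigma> a0 A :: real and a :: "real \<Rightarrow> real^'n \<Rightarrow> real^'n \<Rightarrow> real" and w :: "real^'n \<Rightarrow> real"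
    and u :: "real \<Rightarrow> complex" and x1 x2 \<xi>1 \<xi>2 :: "real^'n"
  assumes s0: "0 < \<sigma>" and s1: "\<sigma> < 1" and a0: "a0 > 0"
    and alo: "\<And>t \<xi> \<eta>. a t \<xi> \<eta> \<ge> a0" and ahi: "\<And>t \<xi> \<eta>. \<bar>a t \<xi> \<eta>\<bar> \<le> A"
    and ac: "continuous_on UNIV (\<lambda>t. a t \<xi>2 (\<xi>1 + t *\<^sub>R \<xi>2))"
    and wc: "continuous_on UNIV w" and w01: "\<And>x. 0 \<le> w x \<and> w x \<le> 1"
    and su: "schwartz u"
begin

definition "D = vderiv u"
definition "P t = Ptilde \<sigma> a w x1 x2 \<xi>1 \<xi>2 u t"
definition "b t = a t \<xi>2 (\<xi>1 + t *\<^sub>R \<xi>2) * Ffun \<sigma> w (x2 - t *\<^sub>R x1)"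
definition "U t = (cmod (u t))^2"
definition "Hh t = (cmod (P t))^2"
definition "J t = Re (u t) * Re (P t) + Im (u t) * Im (P t)"
definition "N t = norm (x2 - t *\<^sub>R x1)"
definition "V t = (1 + (N t)^2) powr \<sigma>"

lemma Pform: "P t = D t / (2 * pi) + complex_of_real (b t) * u t"
  unfolding P_def Ptilde_def D_def b_def by (simp add: field_simps)

lemma ReD: "Re (D t) = 2 * pi * (Re (P t) - b t * Re (u t))" and ImD: "Im (D t) = 2 * pi * (Im (P t) - b t * Im (u t))"
  unfolding Pform by (simp_all add: field_simps)

lemma cross: "Re (u t) * Re (D t) + Im (u t) * Im (D t) = 2 * pi * (J t - b t * U t)"
  unfolding ReD ImD J_def U_def cmod_power2 by (simp add: algebra_simps power2_eq_square)

lemma am: "\<epsilon> > 0 \<Longrightarrow> 2 * \<bar>J t\<bar> \<le> \<epsilon> * U t + Hh t / \<epsilon>"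
  unfolding J_def U_def Hh_def cmod_power2 by (rule amgm)

lemma energy_loc:
  fixes \<phi> \<phi>' :: "real \<Rightarrow> real"
  assumes "\<And>t. (\<phi> has_real_derivative \<phi>' t) (at t)" "continuous_on UNIV \<phi>'"
    "\<And>t. \<bar>\<phi> t\<bar> \<le> K * (1 + t^2)" "\<And>t. \<bar>\<phi>' t\<bar> \<le> K * (1 + t^2)"
  shows "integrable lborel (\<lambda>t. \<phi>' t * U t + 4 * pi * \<phi> t * J t - 4 * pi * \<phi> t * b t * U t)"
    "integral\<^sup>L lborel (\<lambda>t. \<phi>' t * U t + 4 * pi * \<phi> t * J t - 4 * pi * \<phi> t * b t * U t) = 0"
proof -
  have eq: "(\<lambda>t. \<phi>' t * (cmod (u t))^2 + 2 * \<phi> t * (Re (u t) * Re (vderiv u t) + Im (u t) * Im (vderiv u t)))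
     = (\<lambda>t. \<phi>' t * U t + 4 * pi * \<phi> t * J t - 4 * pi * \<phi> t * b t * U t)"
  proof (rule ext)
    fix t
    have c: "Re (u t) * Re (vderiv u t) + Im (u t) * Im (vderiv u t) = 2 * pi * (J t - b t * U t)"
      using cross[of t] unfolding D_def .
    show "\<phi>' t * (cmod (u t))^2 + 2 * \<phi> t * (Re (u t) * Re (vderiv u t) + Im (u t) * Im (vderiv u t))
     = \<phi>' t * U t + 4 * pi * \<phi> t * J t - 4 * pi * \<phi> t * b t * U t"
      unfolding c by (simp add: U_def algebra_simps)
  qed
  from energy[OF su assms] show "integrable lborel (\<lambda>t. \<phi>' t * U t + 4 * pi * \<phi> t * J t - 4 * pi * \<phi> t * b t * U t)"
    "integral\<^sup>L lborel (\<lambda>t. \<phi>' t * U t + 4 * pi * \<phi> t * J t - 4 * pi * \<phi> t * b t * U t) = 0"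
    unfolding eq by auto
qed

lemma F_props: "0 \<le> Ffun \<sigma> w (x2 - t *\<^sub>R x1)"
  "1 \<le> N t \<Longrightarrow> N t powr (2*\<sigma>) \<le> Ffun \<sigma> w (x2 - t *\<^sub>R x1)"
  "V t / 2 - 1 \<le> Ffun \<sigma> w (x2 - t *\<^sub>R x1)"
  "Ffun \<sigma> w (x2 - t *\<^sub>R x1) \<le> 1 + (N t)^2"
  using Ffun_props[OF s0 s1, of w "x2 - t *\<^sub>R x1"] w01 unfolding N_def V_def by auto

lemma A0: "A \<ge> 0" using ahi[of 0 0 0] by linarith

lemma b_ge: "b t \<ge> a0 * Ffun \<sigma> w (x2 - t *\<^sub>R x1)"
  unfolding b_def using alo F_props(1) by (intro mult_right_mono) auto

lemma b_nonneg: "b t \<ge> 0"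
  using b_ge[of t] F_props(1)[of t] a0 by (smt (verit) mult_nonneg_nonneg)

lemma b_le: "b t \<le> A * (1 + (N t)^2)"
proof -
  have "b t \<le> \<bar>a t \<xi>2 (\<xi>1 + t *\<^sub>R \<xi>2)\<bar> * Ffun \<sigma> w (x2 - t *\<^sub>R x1)"
    unfolding b_def using F_props(1)[of t] by (intro mult_right_mono) auto
  also have "\<dots> \<le> A * (1 + (N t)^2)"
    using ahi F_props(1,4)[of t] A0 by (intro mult_mono) auto
  finally show ?thesis .
qed

definition "Q = 2 * ((norm x1)^2 + (norm x2)^2)"

lemma N_le: "(N t)^2 \<le> Q * (1 + t^2)"
proof -
  have "N t \<le> norm x2 + \<bar>t\<bar> * norm x1" unfolding N_def
    by (metis norm_scaleR norm_triangle_ineq4)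
  hence "(N t)^2 \<le> (norm x2 + \<bar>t\<bar> * norm x1)^2" unfolding N_def by (intro power_mono) auto
  also have "\<dots> \<le> 2 * (norm x2)^2 + 2 * t^2 * (norm x1)^2"
    using zero_le_power2[of "norm x2 - \<bar>t\<bar> * norm x1"] by (simp add: power2_eq_square algebra_simps)
  also have "\<dots> \<le> Q * (1 + t^2)" unfolding Q_def
    by (simp add: algebra_simps add_nonneg_nonneg mult_nonneg_nonneg)
  finally show ?thesis .
qed

lemma Q_nonneg: "Q \<ge> 0" unfolding Q_def by simp

lemma cont_F: "continuous_on UNIV (\<lambda>t. Ffun \<sigma> w (x2 - t *\<^sub>R x1))"
proof -
  have cw: "continuous_on UNIV (\<lambda>t. w (x2 - t *\<^sub>R x1))"
    by (rule continuous_on_compose2[OF wc]) (auto intro!: continuous_intros)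
  have cp: "continuous_on UNIV (\<lambda>t. norm (x2 - t *\<^sub>R x1) powr (2*\<sigma>))"
    by (rule continuous_on_powr') (auto intro!: continuous_intros simp: s0)
  show ?thesis unfolding Ffun_def by (intro continuous_intros cw cp)
qed

lemma cont_b: "continuous_on UNIV b"
  unfolding b_def[abs_def] by (intro continuous_intros ac cont_F)

lemma cont_u: "continuous_on UNIV u" and cont_D: "continuous_on UNIV D"
  using schwartz_facts(2,3)[OF su] unfolding D_def by auto

lemma cont_P: "continuous_on UNIV P"
proof -
  have "P = (\<lambda>t. D t / (2 * pi) + complex_of_real (b t) * u t)" using Pform by auto
  thus ?thesis by (simp) (intro continuous_intros cont_D cont_b cont_u | simp)+
qed

lemma cont_N: "continuous_on UNIV N"
  unfolding N_def[abs_def] by (intro continuous_intros)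

lemma cont_V: "continuous_on UNIV V"
  unfolding V_def[abs_def]
  by (rule continuous_on_powr') (auto intro!: continuous_intros cont_N simp: add_nonneg_nonneg s0)

end



context fx begin

definition "r = max 1 (norm x1)"
definition "\<alpha> = 2*\<sigma>/(2*\<sigma>+1)"
definition "R = r powr \<alpha>"
definition "cc = min (1/4) a0"
definition "K1 = 256 * pi^2 / cc^2"

lemma r1: "r \<ge> 1" unfolding r_def by simp
lemma R1: "R \<ge> 1" unfolding R_def \<alpha>_def using r1 s0 by (simp add: ge_one_powr_ge_zero)
lemma cc0: "cc > 0" unfolding cc_def using a0 by simp
lemma U0: "U t \<ge> 0" unfolding U_def by simp
lemma Hh0: "Hh t \<ge> 0" unfolding Hh_def by simp
lemma K10: "K1 \<ge> 0" unfolding K1_def by simp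

lemma B_est: "\<exists>E1 c1. integrable lborel E1 \<and> integral\<^sup>L lborel E1 = 0 \<and> (\<forall>t. R^2 * U t \<le> K1 * Hh t + U t - c1 * E1 t)"
proof (cases "norm x1 \<le> 1")
  case True
  hence "r = 1" unfolding r_def by simp
  hence "R = 1" unfolding R_def by simp
  thus ?thesis using K10 Hh0 by (intro exI[of _ "\<lambda>t. 0"] exI[of _ 0]) (auto simp: mult_nonneg_nonneg)
next
  case False
  hence rx: "r = norm x1" unfolding r_def by simp
  have x10: "x1 \<noteq> 0" using False by auto
  define ts where "ts = (x1 \<bullet> x2) / (x1 \<bullet> x1)"
  define \<phi> where "\<phi> t = 2 - arctan (R * (t - ts)) / 2" for t
  define \<phi>' where "\<phi>' t = - (R / (2 * (1 + (R * (t - ts))^2)))" for t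
  define E1 where "E1 t = \<phi>' t * U t + 4 * pi * \<phi> t * J t - 4 * pi * \<phi> t * b t * U t" for t
  have Rp: "R > 0" using R1 by simp
  have pos: "1 + (R * (t - ts))^2 > 0" for t by (simp add: add_pos_nonneg)
  have dphi: "(\<phi> has_real_derivative \<phi>' t) (at t)" for t
    unfolding \<phi>_def[abs_def] \<phi>'_def
    using pos[of t] by (auto intro!: derivative_eq_intros simp: field_simps)
  have cphi': "continuous_on UNIV \<phi>'"
    unfolding \<phi>'_def[abs_def] by (intro continuous_intros) (use pos in \<open>auto simp: add_nonneg_eq_0_iff\<close>)
  have arc: "\<bar>arctan y\<bar> < 2" for y using arctan_bounded[of y] pi_less_4 by linarith
  have phib: "1 \<le> \<phi> t" "\<phi> t \<le> 3" for t unfolding \<phi>_def using arc[of "R * (t - ts)"] by auto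
  have K: "\<bar>\<phi> t\<bar> \<le> (3 + R) * (1 + t^2)" "\<bar>\<phi>' t\<bar> \<le> (3 + R) * (1 + t^2)" for t
  proof -
    have one: "(1::real) \<le> 1 + t^2" by simp
    have "\<bar>\<phi> t\<bar> \<le> 3 + R" using phib[of t] Rp by auto
    also have "\<dots> \<le> (3 + R) * (1 + t^2)"
    proof -
      have "(3 + R) * 1 \<le> (3 + R) * (1 + t^2)" using one Rp by (intro mult_left_mono) auto
      thus ?thesis by simp
    qed
    finally show "\<bar>\<phi> t\<bar> \<le> (3 + R) * (1 + t^2)" .
    have "\<bar>\<phi>' t\<bar> = R / (2 * (1 + (R * (t - ts))^2))" unfolding \<phi>'_def using Rp pos[of t] by simp
    also have "\<dots> \<le> R / 2"
    proof -
      have "2 \<le> 2 * (1 + (R * (t - ts))^2)" by simp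
      moreover have "0 < 2 * (1 + (R * (t - ts))^2) * 2" using pos[of t] by simp
      ultimately show ?thesis using divide_left_mono[of 2 "2 * (1 + (R * (t - ts))^2)" R] Rp by simp
    qed
    also have "\<dots> \<le> (3 + R) * (1 + t^2)"
    proof -
      have "(3 + R) * 1 \<le> (3 + R) * (1 + t^2)" using one Rp by (intro mult_left_mono) auto
      hence "3 + R \<le> (3 + R) * (1 + t^2)" by (simp only: mult_1_right)
      thus ?thesis using Rp by linarith
    qed
    finally show "\<bar>\<phi>' t\<bar> \<le> (3 + R) * (1 + t^2)" .
  qed
  note en = energy_loc[OF dphi cphi' K(1) K(2)]
  have pw: "R^2 * U t \<le> K1 * Hh t + U t - (2 * R / cc) * E1 t" for t
  proof -
    define s where "s = R * (t - ts)"
    have key: "- \<phi>' t + 4 * pi * \<phi> t * b t \<ge> cc * R"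
    proof (cases "\<bar>s\<bar> \<le> 1")
      case True
      have "s^2 \<le> 1" using True by (simp add: abs_square_le_1)
      hence "R / 4 \<le> R / (2 * (1 + s^2))" using Rp zero_le_power2[of s] by (intro divide_left_mono) (auto simp: add_pos_nonneg)
      moreover have "- \<phi>' t = R / (2 * (1 + s^2))" unfolding \<phi>'_def s_def by simp
      moreover have "cc * R \<le> (1/4) * R" unfolding cc_def using Rp by (intro mult_right_mono) auto
      ultimately have "cc * R \<le> - \<phi>' t" by linarith
      moreover have "4 * pi * \<phi> t * b t \<ge> 0" using phib[of t] b_nonneg[of t] by simp
      ultimately show ?thesis by linarith
    next
      case False
      have sa: "\<bar>s\<bar> = R * \<bar>t - ts\<bar>" unfolding s_def using Rp by (simp add: abs_mult)
      have "1 < R * \<bar>t - ts\<bar>" using False sa by linarith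
      hence tt: "\<bar>t - ts\<bar> > 1 / R" using Rp by (simp add: pos_divide_less_eq mult.commute)
      have g: "(norm x1)^2 * (t - ts)^2 \<le> (N t)^2" using geom[OF x10, of t] unfolding N_def ts_def by simp
      have Nge: "norm x1 * \<bar>t - ts\<bar> \<le> N t"
        by (rule power2_le_imp_le) (use g in \<open>auto simp: power_mult_distrib N_def\<close>)
      have "r / R = r powr (1 / (2*\<sigma>+1))"
      proof -
        have e: "1 / (2*\<sigma>+1) = 1 - \<alpha>" unfolding \<alpha>_def using s0 by (simp add: field_simps)
        have "r powr (1 / (2*\<sigma>+1)) = r powr 1 / r powr \<alpha>" unfolding e by (rule powr_diff)
        thus ?thesis using r1 unfolding R_def by simp
      qed
      moreover have "r / R \<le> N t"
      proof -
        have "r / R = norm x1 * (1 / R)" using rx by simp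
        also have "\<dots> \<le> norm x1 * \<bar>t - ts\<bar>" using tt by (intro mult_left_mono) auto
        finally show ?thesis using Nge by linarith
      qed
      ultimately have Nr: "r powr (1 / (2*\<sigma>+1)) \<le> N t" by simp
      have rr1: "1 \<le> r powr (1 / (2*\<sigma>+1))" using r1 s0 by (simp add: ge_one_powr_ge_zero)
      have N1: "1 \<le> N t" using Nr rr1 by linarith
      have "R = (r powr (1 / (2*\<sigma>+1))) powr (2*\<sigma>)" unfolding R_def \<alpha>_def by (simp add: powr_powr)
      also have "\<dots> \<le> N t powr (2*\<sigma>)" by (rule powr_mono2) (use s0 Nr rr1 in auto)
      also have "\<dots> \<le> Ffun \<sigma> w (x2 - t *\<^sub>R x1)" using F_props(2)[OF N1] .
      finally have "a0 * R \<le> b t" using b_ge[of t] a0 by (smt (verit) mult_left_mono)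
      hence "4 * pi * \<phi> t * (a0 * R) \<le> 4 * pi * \<phi> t * b t" using phib[of t] by (intro mult_left_mono) auto
      moreover have "cc * R \<le> 4 * pi * \<phi> t * (a0 * R)"
      proof -
        have "cc * R \<le> a0 * R" unfolding cc_def using Rp by (intro mult_right_mono) auto
        also have "\<dots> \<le> (4 * pi * \<phi> t) * (a0 * R)"
        proof -
          have "1 * 1 \<le> pi * \<phi> t" using phib[of t] pi_ge_two by (intro mult_mono) auto
          hence "1 \<le> 4 * pi * \<phi> t" by simp
          from mult_right_mono[OF this, of "a0 * R"] a0 Rp show ?thesis by simp
        qed
        finally show ?thesis by simp
      qed
      moreover have "- \<phi>' t \<ge> 0" unfolding \<phi>'_def using Rp pos[of t] by simp
      ultimately show ?thesis by linarith
    qed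
    have "R^2 * U t \<le> (256 * pi^2 / cc^2) * Hh t - (2 * R / cc) * E1 t"
      by (rule scalarB[OF cc0 Rp U0 am _ _ key]) (use phib[of t] in \<open>auto simp: E1_def\<close>)
    thus ?thesis unfolding K1_def using U0[of t] by linarith
  qed
  show ?thesis
    by (intro exI[of _ E1] exI[of _ "2 * R / cc"]) (use en pw in \<open>auto simp: E1_def[abs_def]\<close>)
qed

end


context fx begin

definition "K = max 1 (36 / (pi * a0))"
definition "\<kappa> = K powr (2*\<sigma>+1)"
definition "Kp = K powr (2*\<sigma>)"
definition "\<rho> = K * r powr (1/(2*\<sigma>+1))"
definition "\<rho>2 = \<rho> powr (2*\<sigma>)"
definition "\<beta> = (2/(pi*a0)) * (pi*a0/2 + 4*pi) * Kp^2"
definition "\<gamma> = (2/(pi*a0)) * (4*pi + 32*pi/a0)"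

lemma K1': "K \<ge> 1" unfolding K_def by simp
lemma rr1: "r powr (1/(2*\<sigma>+1)) \<ge> 1" using r1 s0 by (simp add: ge_one_powr_ge_zero)
lemma rho1: "\<rho> \<ge> 1" unfolding \<rho>_def using K1' rr1 by (metis mult_mono' mult_1 zero_le_one)
lemma rho2_eq: "\<rho>2 = Kp * R"
proof -
  have "\<rho>2 = K powr (2*\<sigma>) * (r powr (1/(2*\<sigma>+1))) powr (2*\<sigma>)"
    unfolding \<rho>2_def \<rho>_def using K1' r1 by (simp add: powr_mult)
  also have "(r powr (1/(2*\<sigma>+1))) powr (2*\<sigma>) = R" unfolding R_def \<alpha>_def by (simp add: powr_powr)
  finally show ?thesis unfolding Kp_def .
qed
lemma rho4: "\<rho> powr (4*\<sigma>) = \<rho>2^2"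
  unfolding \<rho>2_def power2_eq_square powr_add[symmetric] by simp
lemma rho_2s1: "\<rho> powr (2*\<sigma>+1) = \<kappa> * r"
proof -
  have "\<rho> powr (2*\<sigma>+1) = K powr (2*\<sigma>+1) * (r powr (1/(2*\<sigma>+1))) powr (2*\<sigma>+1)"
    unfolding \<rho>_def using K1' r1 by (simp add: powr_mult)
  also have "(r powr (1/(2*\<sigma>+1))) powr (2*\<sigma>+1) = r" using r1 s0 by (simp add: powr_powr)
  finally show ?thesis unfolding \<kappa>_def .
qed
lemma kappa: "\<kappa> > 0" "18 / \<kappa> \<le> pi * a0 / 2"
proof -
  have "K powr 1 \<le> K powr (2*\<sigma>+1)" by (rule powr_mono) (use K1' s0 in auto)
  hence kk: "K \<le> \<kappa>" unfolding \<kappa>_def using K1' by simp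
  show kp: "\<kappa> > 0" using kk K1' by linarith
  have "36 / (pi * a0) \<le> \<kappa>" using kk unfolding K_def by linarith
  hence "18 / \<kappa> \<le> 18 / (36 / (pi * a0))" using a0 kp by (intro divide_left_mono) auto
  thus "18 / \<kappa> \<le> pi * a0 / 2" by simp
qed
lemma rho2_pos: "\<rho>2 > 0" unfolding \<rho>2_def using rho1 by simp

lemma V1: "V t \<ge> 1" and Vle: "V t \<le> 1 + (N t)^2" unfolding V_def using V_props[OF s0 s1] by auto

definition "Z t = \<rho>^2 + (x2 \<bullet> x2 - 2 * t * (x1 \<bullet> x2) + t^2 * (x1 \<bullet> x1))"
definition "\<phi>2 t = Z t powr \<sigma>"
definition "\<phi>2' t = \<sigma> * Z t powr (\<sigma> - 1) * (2 * t * (x1 \<bullet> x1) - 2 * (x1 \<bullet> x2))"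
definition "E2 t = \<phi>2' t * U t + 4 * pi * \<phi>2 t * J t - 4 * pi * \<phi>2 t * b t * U t"

lemma Z_eq: "Z t = \<rho>^2 + (N t)^2" unfolding Z_def N_def normsq_expand ..
lemma Z_ge: "Z t \<ge> 1 + (N t)^2" "Z t \<ge> \<rho>^2" "Z t \<ge> 1"
proof -
  have "\<rho>^2 \<ge> 1" using rho1 by simp
  moreover have "0 \<le> (N t)^2" by simp
  ultimately show "Z t \<ge> 1 + (N t)^2" "Z t \<ge> \<rho>^2" "Z t \<ge> 1" unfolding Z_eq by linarith+
qed
lemma Z_pos: "Z t > 0" using Z_ge(3)[of t] by linarith

lemma phi2_ge: "\<phi>2 t \<ge> V t"
  unfolding \<phi>2_def V_def by (rule powr_mono2) (use s0 Z_ge in \<open>auto simp: add_nonneg_nonneg\<close>)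

lemma phi2_le: "\<phi>2 t \<le> 2 * (\<rho>2 + V t)"
proof -
  define m where "m = max (\<rho>^2) (1 + (N t)^2)"
  have m1: "m \<ge> 1" unfolding m_def using zero_le_power2[of "N t"] by (simp add: le_max_iff_disj)
  have "\<rho>^2 \<le> m" "1 + (N t)^2 \<le> m" unfolding m_def by simp_all
  hence "Z t \<le> 2 * m" unfolding Z_eq by linarith
  hence "\<phi>2 t \<le> (2 * m) powr \<sigma>" unfolding \<phi>2_def by (intro powr_mono2) (use s0 Z_pos in \<open>auto simp: less_imp_le\<close>)
  also have "\<dots> = 2 powr \<sigma> * m powr \<sigma>" using m1 by (simp add: powr_mult)
  also have "\<dots> \<le> 2 * m powr \<sigma>"
  proof -
    have "(2::real) powr \<sigma> \<le> 2 powr 1" by (rule powr_mono) (use s1 in auto)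
    thus ?thesis by (intro mult_right_mono) auto
  qed
  also have "m powr \<sigma> \<le> \<rho>2 + V t"
  proof -
    have r2: "\<rho>^2 = \<rho> powr 2" using rho1 by (simp add: powr_realpow)
    have a: "(\<rho>^2) powr \<sigma> = \<rho>2" unfolding \<rho>2_def r2 by (simp add: powr_powr mult.commute)
    have "m powr \<sigma> = (\<rho>^2) powr \<sigma> \<or> m powr \<sigma> = V t" unfolding m_def V_def by (simp add: max_def)
    moreover have "0 \<le> (\<rho>^2) powr \<sigma>" "0 \<le> V t" using V1[of t] by auto
    ultimately show ?thesis using a by linarith
  qed
  hence "2 * m powr \<sigma> \<le> 2 * (\<rho>2 + V t)" by simp
  finally show ?thesis .
qed

lemma phi2_nonneg: "\<phi>2 t \<ge> 0" unfolding \<phi>2_def by simp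

lemma phi2'_bound0: "\<bar>\<phi>2' t\<bar> \<le> 2 * norm x1 * Z t powr (\<sigma> - 1/2)"
proof -
  have qd: "2 * t * (x1 \<bullet> x1) - 2 * (x1 \<bullet> x2) = - 2 * (x1 \<bullet> (x2 - t *\<^sub>R x1))"
    by (simp add: inner_diff_right algebra_simps)
  have cs: "\<bar>x1 \<bullet> (x2 - t *\<^sub>R x1)\<bar> \<le> norm x1 * N t" unfolding N_def by (rule Cauchy_Schwarz_ineq2)
  have NZ: "N t \<le> Z t powr (1/2)"
  proof -
    have "N t = ((N t)^2) powr (1/2)" unfolding N_def by (simp add: powr_half_sqrt)
    also have "\<dots> \<le> Z t powr (1/2)" by (rule powr_mono2) (use Z_ge[of t] in auto)
    finally show ?thesis .
  qed
  have "\<bar>\<phi>2' t\<bar> = \<sigma> * Z t powr (\<sigma> - 1) * (2 * \<bar>x1 \<bullet> (x2 - t *\<^sub>R x1)\<bar>)"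
    unfolding \<phi>2'_def qd using s0 by (simp add: abs_mult)
  also have "\<dots> \<le> 1 * Z t powr (\<sigma> - 1) * (2 * (norm x1 * Z t powr (1/2)))"
  proof -
    have i1: "\<sigma> * Z t powr (\<sigma> - 1) \<le> 1 * Z t powr (\<sigma> - 1)"
      by (rule mult_right_mono) (use s1 in auto)
    have "norm x1 * N t \<le> norm x1 * Z t powr (1/2)" using NZ by (rule mult_left_mono) simp
    hence i2: "2 * \<bar>x1 \<bullet> (x2 - t *\<^sub>R x1)\<bar> \<le> 2 * (norm x1 * Z t powr (1/2))" using cs by linarith
    show ?thesis by (rule mult_mono[OF i1 i2]) auto
  qed
  also have "\<dots> = 2 * norm x1 * (Z t powr (\<sigma> - 1) * Z t powr (1/2))" by simp
  also have "Z t powr (\<sigma> - 1) * Z t powr (1/2) = Z t powr (\<sigma> - 1/2)"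
    unfolding powr_add[symmetric] by simp
  finally show ?thesis .
qed

lemma phi2'_bound: "\<bar>\<phi>2' t\<bar> \<le> (18 / \<kappa>) * (\<rho>2^2 + (V t)^2)"
proof -
  have rk: "norm x1 \<le> \<rho> powr (2*\<sigma>+1) / \<kappa>" unfolding rho_2s1 using kappa(1) r_def by simp
  have zz: "0 \<le> Z t powr (\<sigma> - 1/2)" by simp
  have "\<bar>\<phi>2' t\<bar> \<le> 2 * (\<rho> powr (2*\<sigma>+1) / \<kappa>) * Z t powr (\<sigma> - 1/2)"
  proof -
    have "2 * norm x1 \<le> 2 * (\<rho> powr (2*\<sigma>+1) / \<kappa>)" using rk by simp
    from mult_right_mono[OF this zz] phi2'_bound0[of t] show ?thesis by linarith
  qed
  also have "\<dots> = (2 / \<kappa>) * (\<rho> powr (2*\<sigma>+1) * Z t powr (\<sigma> - 1/2))" by simp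
  also have "\<dots> \<le> (2 / \<kappa>) * (\<rho> powr (4*\<sigma>) + Z t powr (2*\<sigma>))"
    using key_powr[OF s0 _ Z_ge(2)[of t]] rho1 kappa(1) by (intro mult_left_mono) auto
  finally have A: "\<bar>\<phi>2' t\<bar> \<le> (2 / \<kappa>) * (\<rho>2^2 + Z t powr (2*\<sigma>))" unfolding rho4 .
  have "Z t powr (2*\<sigma>) = (\<phi>2 t)^2" unfolding \<phi>2_def power2_eq_square powr_add[symmetric] by simp
  also have "(\<phi>2 t)^2 \<le> (2 * (\<rho>2 + V t))^2" using phi2_le phi2_nonneg by (intro power_mono)
  also have "\<dots> \<le> 8 * \<rho>2^2 + 8 * (V t)^2"
    using zero_le_power2[of "\<rho>2 - V t"] by (simp add: power2_eq_square algebra_simps)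
  finally have B0: "Z t powr (2*\<sigma>) \<le> 8 * \<rho>2^2 + 8 * (V t)^2" .
  have B: "\<rho>2^2 + Z t powr (2*\<sigma>) \<le> 9 * (\<rho>2^2 + (V t)^2)"
    unfolding distrib_left using B0 zero_le_power2[of "V t"] by linarith
  have "(2 / \<kappa>) * (\<rho>2^2 + Z t powr (2*\<sigma>)) \<le> (2 / \<kappa>) * (9 * (\<rho>2^2 + (V t)^2))"
    using B kappa(1) by (intro mult_left_mono) auto
  also have "\<dots> = (18 / \<kappa>) * (\<rho>2^2 + (V t)^2)" by simp
  finally show ?thesis using A by linarith
qed

end


context fx begin
lemma phi2_b: "\<phi>2 t * b t \<ge> a0 * ((V t)^2 / 2 - V t)"
proof -
  let ?F = "Ffun \<sigma> w (x2 - t *\<^sub>R x1)"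
  have F0: "?F \<ge> 0" using F_props(1) .
  have "\<phi>2 t * b t \<ge> \<phi>2 t * (a0 * ?F)" using b_ge phi2_nonneg by (intro mult_left_mono)
  moreover have "\<phi>2 t * (a0 * ?F) \<ge> V t * (a0 * ?F)" using phi2_ge F0 a0 by (intro mult_right_mono) auto
  moreover have "V t * (a0 * ?F) \<ge> V t * (a0 * (V t / 2 - 1))"
    using F_props(3)[of t] V1[of t] a0 by (intro mult_left_mono) auto
  moreover have "V t * (a0 * (V t / 2 - 1)) = a0 * ((V t)^2 / 2 - V t)" by (simp add: power2_eq_square algebra_simps)
  ultimately show ?thesis by linarith
qed

lemma C_est: "\<exists>E. integrable lborel E \<and> integral\<^sup>L lborel E = 0 \<and>
   (\<forall>t. (V t)^2 * U t \<le> 16 * U t + \<beta> * R^2 * U t + \<gamma> * Hh t - (2/(pi*a0)) * E t)"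
proof -
  have dZ: "(Z has_real_derivative (2 * t * (x1 \<bullet> x1) - 2 * (x1 \<bullet> x2))) (at t)" for t
    unfolding Z_def[abs_def] by (auto intro!: derivative_eq_intros simp: algebra_simps)
  have dphi: "(\<phi>2 has_real_derivative \<phi>2' t) (at t)" for t
  proof -
    have "((\<lambda>x. Z x powr \<sigma>) has_real_derivative \<sigma> * Z t powr (\<sigma> - real 1) * (2 * t * (x1 \<bullet> x1) - 2 * (x1 \<bullet> x2))) (at t)"
      by (rule DERIV_fun_powr[OF dZ Z_pos])
    thus ?thesis unfolding \<phi>2_def[abs_def] \<phi>2'_def by simp
  qed
  have cZ: "continuous_on UNIV Z" unfolding Z_def[abs_def] by (intro continuous_intros)
  have cphi': "continuous_on UNIV \<phi>2'"
  proof -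
    have "continuous_on UNIV (\<lambda>t. Z t powr (\<sigma> - 1))"
    proof (rule continuous_on_powr')
      show "\<forall>x\<in>UNIV. 0 \<le> Z x \<and> (Z x = 0 \<longrightarrow> 0 < \<sigma> - 1)" using Z_pos by (metis less_imp_le less_irrefl)
    qed (use cZ in \<open>auto intro!: continuous_intros\<close>)
    moreover have zne: "\<forall>x\<in>UNIV. Z x \<noteq> 0" using Z_pos by (metis less_irrefl)
    ultimately show ?thesis unfolding \<phi>2'_def[abs_def] by (intro continuous_intros cZ zne)
  qed
  define Kb where "Kb = (\<rho>^2 + Q) * (1 + 2 * norm x1)"
  have Zb: "Z t \<le> (\<rho>^2 + Q) * (1 + t^2)" for t
  proof -
    have "Z t \<le> \<rho>^2 + Q * (1 + t^2)" unfolding Z_eq using N_le[of t] by linarith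
    also have "\<dots> \<le> (\<rho>^2 + Q) * (1 + t^2)"
    proof -
      have "\<rho>^2 * 1 \<le> \<rho>^2 * (1 + t^2)" by (intro mult_left_mono) auto
      thus ?thesis by (simp add: algebra_simps)
    qed
    finally show ?thesis .
  qed
  have Zp1: "Z t powr a \<le> Z t" if "a \<le> 1" for t a
  proof -
    have "Z t powr a \<le> Z t powr 1" by (rule powr_mono) (use that Z_ge(3)[of t] in auto)
    thus ?thesis using Z_pos[of t] by simp
  qed
  have QR: "0 \<le> (\<rho>^2 + Q) * (1 + t^2)" for t using Q_nonneg by (simp add: add_nonneg_nonneg)
  have Kb1: "(\<rho>^2 + Q) * (1 + t^2) \<le> Kb * (1 + t^2)" for t
  proof -
    have q: "0 \<le> \<rho>^2 + Q" using Q_nonneg by (simp add: add_nonneg_nonneg)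
    have "(\<rho>^2 + Q) * 1 \<le> (\<rho>^2 + Q) * (1 + 2 * norm x1)" using q by (intro mult_left_mono) auto
    hence "\<rho>^2 + Q \<le> Kb" unfolding Kb_def by simp
    thus ?thesis by (intro mult_right_mono) auto
  qed
  have Kphi: "\<bar>\<phi>2 t\<bar> \<le> Kb * (1 + t^2)" for t
  proof -
    have "\<bar>\<phi>2 t\<bar> = \<phi>2 t" using phi2_nonneg by simp
    also have "\<dots> \<le> Z t" unfolding \<phi>2_def using Zp1 s1 by simp
    finally show ?thesis using Zb[of t] Kb1[of t] by linarith
  qed
  have Kphi': "\<bar>\<phi>2' t\<bar> \<le> Kb * (1 + t^2)" for t
  proof -
    have "\<bar>\<phi>2' t\<bar> \<le> 2 * norm x1 * Z t powr (\<sigma> - 1/2)" by (rule phi2'_bound0)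
    also have "\<dots> \<le> 2 * norm x1 * ((\<rho>^2 + Q) * (1 + t^2))"
      using Zp1[of "\<sigma> - 1/2" t] Zb[of t] s1 by (intro mult_left_mono) auto
    also have "\<dots> \<le> Kb * (1 + t^2)" unfolding Kb_def using QR[of t]
      by (simp add: algebra_simps)
    finally show ?thesis .
  qed
  note en = energy_loc[OF dphi cphi' Kphi Kphi']
  have pw: "(V t)^2 * U t \<le> 16 * U t + \<beta> * R^2 * U t + \<gamma> * Hh t - (2/(pi*a0)) * E2 t" for t
  proof -
    have sc: "(pi * a0 / 2) * (V t)^2 * U t \<le> 8 * pi * a0 * U t + (pi * a0 / 2 + 4 * pi) * \<rho>2^2 * U t + (4 * pi + 32 * pi / a0) * Hh t - E2 t"
      by (rule scalarC[OF a0 kappa(1) kappa(2) U0 V1 rho2_pos phi2'_bound phi2_ge phi2_le phi2_b _ am])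
         (simp add: E2_def)
    have pa: "pi * a0 > 0" using a0 by simp
    have "(2/(pi*a0)) * ((pi * a0 / 2) * (V t)^2 * U t) \<le> (2/(pi*a0)) * (8 * pi * a0 * U t + (pi * a0 / 2 + 4 * pi) * \<rho>2^2 * U t + (4 * pi + 32 * pi / a0) * Hh t - E2 t)"
      using sc pa by (intro mult_left_mono) auto
    moreover have "(2/(pi*a0)) * ((pi * a0 / 2) * (V t)^2 * U t) = (V t)^2 * U t" using pa a0 by simp
    moreover have "(2/(pi*a0)) * (8 * pi * a0 * U t + (pi * a0 / 2 + 4 * pi) * \<rho>2^2 * U t + (4 * pi + 32 * pi / a0) * Hh t - E2 t)
        = 16 * U t + \<beta> * R^2 * U t + \<gamma> * Hh t - (2/(pi*a0)) * E2 t"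
      unfolding \<beta>_def \<gamma>_def rho2_eq using pa a0 by (simp add: field_simps power2_eq_square)
    ultimately show ?thesis by linarith
  qed
  show ?thesis by (intro exI[of _ E2]) (use en pw in \<open>auto simp: E2_def[abs_def]\<close>)
qed

end


definition Cst :: "real \<Rightarrow> real \<Rightarrow> real" where
  "Cst \<sigma> a0 = (let K = max 1 (36 / (pi * a0)); Kp = K powr (2*\<sigma>); cc = min (1/4) a0;
      K1 = 256 * pi^2 / cc^2; \<beta> = (2/(pi*a0)) * (pi*a0/2 + 4*pi) * Kp^2;
      \<gamma> = (2/(pi*a0)) * (4*pi + 32*pi/a0); \<Gamma> = 12 + 3 * \<beta> in 51 + \<Gamma> + 3 * \<gamma> + \<Gamma> * K1)"

lemma Cst_pos: "a0 > 0 \<Longrightarrow> Cst \<sigma> a0 > 0"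
  unfolding Cst_def Let_def by (intro add_pos_nonneg mult_nonneg_nonneg) (auto intro!: add_nonneg_nonneg mult_nonneg_nonneg)

lemma decay_aux:
  fixes p c M L x :: real
  assumes "p \<ge> 1" "0 \<le> c" "c \<le> M / p^2" "0 \<le> L" "0 \<le> x" "x \<le> L * p * c"
  shows "x^2 \<le> (L * M)^2 / p"
proof -
  have "x^2 \<le> (L * p * c)^2" using assms by (intro power_mono) auto
  also have "\<dots> \<le> (L * p * (M / p^2))^2" using assms by (intro power_mono mult_left_mono) auto
  also have "\<dots> = (L * M)^2 / p^2" using assms by (simp add: field_simps power2_eq_square)
  also have "\<dots> \<le> (L * M)^2 / p"
  proof (rule divide_left_mono)
    show "p \<le> p^2" using assms(1) by (simp add: power2_eq_square)
  qed (use assms in auto)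
  finally show ?thesis .
qed

lemma integrable_decay:
  fixes f :: "real \<Rightarrow> real"
  assumes "continuous_on UNIV f" "\<And>t. 0 \<le> f t" "\<And>t. f t \<le> B / (1 + t^2)"
  shows "integrable lborel f"
  by (rule integrable_bounded_by[OF assms(1)]) (use assms(2,3) in \<open>simp add: divide_inverse\<close>)

context fx begin

definition "W t = 1 + jbr x1 powr (2*\<sigma>/(2*\<sigma>+1)) + jbr (x2 - t *\<^sub>R x1) powr (2*\<sigma>)"

lemma W_eq: "W t = 1 + jbr x1 powr \<alpha> + V t"
  unfolding W_def \<alpha>_def V_def N_def jbr_powr ..

lemma Xa: "jbr x1 powr \<alpha> \<le> 2 * R"
proof -
  have a0': "0 \<le> \<alpha>" "\<alpha> \<le> 1" unfolding \<alpha>_def using s0 by auto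
  have "jbr x1 \<le> 2 * r"
  proof -
    have "norm x1 \<le> r" unfolding r_def by simp
    hence "(norm x1)^2 \<le> r^2" by (intro power_mono) auto
    moreover have "1 * 1 \<le> r * r" using r1 by (intro mult_mono) auto
    ultimately have "1 + (norm x1)^2 \<le> (2 * r)^2" by (simp add: power2_eq_square)
    hence q1: "sqrt (1 + (norm x1)^2) \<le> sqrt ((2*r)^2)" by (rule real_sqrt_le_mono)
    have q2: "sqrt ((2*r)^2) = 2*r" using r1 by (subst real_sqrt_abs) simp
    have "sqrt (1 + (norm x1)^2) \<le> 2 * r" using q1 q2 by linarith
    thus ?thesis unfolding jbr_def .
  qed
  hence "jbr x1 powr \<alpha> \<le> (2 * r) powr \<alpha>" using a0' by (intro powr_mono2) (auto simp: jbr_def)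
  also have "\<dots> = 2 powr \<alpha> * R" unfolding R_def using r1 by (simp add: powr_mult)
  also have "\<dots> \<le> 2 * R"
  proof -
    have "(2::real) powr \<alpha> \<le> 2 powr 1" by (rule powr_mono) (use a0' in auto)
    thus ?thesis using R1 by (intro mult_right_mono) auto
  qed
  finally show ?thesis .
qed

lemma W_sq: "(W t)^2 \<le> 3 + 12 * R^2 + 3 * (V t)^2"
proof -
  have w0: "0 \<le> W t" unfolding W_eq using V1[of t] by (simp add: add_nonneg_nonneg)
  have "W t \<le> 1 + 2 * R + V t" unfolding W_eq using Xa by simp
  hence "(W t)^2 \<le> (1 + 2 * R + V t)^2" using w0 by (intro power_mono)
  also have "\<dots> \<le> 3 + 12 * R^2 + 3 * (V t)^2"
    using zero_le_power2[of "1 - 2 * R"] zero_le_power2[of "1 - V t"] zero_le_power2[of "2 * R - V t"]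
    by (simp add: power2_eq_square algebra_simps)
  finally show ?thesis .
qed

lemma cont_W: "continuous_on UNIV W"
  unfolding W_eq[abs_def] by (intro continuous_intros cont_V)

definition "Cfin = Cst \<sigma> a0"

lemma Cfin_eq: "Cfin = 51 + (12 + 3 * \<beta>) + 3 * \<gamma> + (12 + 3 * \<beta>) * K1"
  unfolding Cfin_def Cst_def Let_def \<beta>_def \<gamma>_def K1_def cc_def Kp_def K_def ..

lemma coeffs: "51 + (12 + 3 * \<beta>) \<le> Cfin" "3 * \<gamma> + (12 + 3 * \<beta>) * K1 \<le> Cfin"
proof -
  have "\<beta> \<ge> 0" unfolding \<beta>_def using a0 by (auto intro!: mult_nonneg_nonneg add_nonneg_nonneg)
  moreover have "\<gamma> \<ge> 0" unfolding \<gamma>_def using a0 by (auto intro!: mult_nonneg_nonneg add_nonneg_nonneg)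
  moreover have "K1 \<ge> 0" by (rule K10)
  ultimately show "51 + (12 + 3 * \<beta>) \<le> Cfin" "3 * \<gamma> + (12 + 3 * \<beta>) * K1 \<le> Cfin"
    unfolding Cfin_eq by (auto intro!: mult_nonneg_nonneg)
qed

lemma integrables: "integrable lborel U" "integrable lborel Hh" "integrable lborel (\<lambda>t. (W t)^2 * U t)"
proof -
  obtain M where M0: "M \<ge> 0" and M: "\<And>t. cmod (u t) \<le> M * inverse ((1 + t^2)^2) \<and> cmod (D t) \<le> M * inverse ((1 + t^2)^2)"
    using schwartz_facts(4)[OF su] unfolding D_def by blast
  have Mu: "cmod (u t) \<le> M / (1+t^2)^2" and MD: "cmod (D t) \<le> M / (1+t^2)^2" for t
    using M[of t] by (simp_all add: divide_inverse)
  have p1: "1 \<le> 1 + t^2" for t :: real by simp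
  have cU: "continuous_on UNIV U" unfolding U_def[abs_def] by (intro continuous_intros cont_u)
  show "integrable lborel U"
  proof (rule integrable_decay[OF cU])
    show "U t \<le> (1 * M)^2 / (1 + t^2)" for t unfolding U_def
      by (rule decay_aux[OF p1 _ Mu]) (use p1[of t] in \<open>auto intro: mult_left_le_one_le order.trans[OF _ mult_right_mono[of 1]]\<close>)
  qed (simp add: U_def)
  define L where "L = 1 + A * (1 + Q)"
  have L0: "L \<ge> 0" unfolding L_def using A0 Q_nonneg by simp
  show "integrable lborel Hh"
  proof (rule integrable_decay)
    show "continuous_on UNIV Hh" unfolding Hh_def[abs_def] by (intro continuous_intros cont_P)
    show "0 \<le> Hh t" for t by (rule Hh0)
    show "Hh t \<le> (L * (2 * M))^2 / (1 + t^2)" for t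
    proof -
      have cs: "cmod (u t) + cmod (D t) \<le> (2 * M) / (1 + t^2)^2" using Mu[of t] MD[of t] by simp
      have bb: "\<bar>b t\<bar> \<le> A * (1 + Q) * (1 + t^2)"
      proof -
        have "\<bar>b t\<bar> \<le> A * (1 + (N t)^2)" using b_le[of t] b_nonneg[of t] by simp
        also have "\<dots> \<le> A * (1 + Q * (1 + t^2))" using N_le[of t] A0 by (intro mult_left_mono) auto
        also have "\<dots> \<le> A * ((1 + Q) * (1 + t^2))" using A0 Q_nonneg p1[of t]
          by (intro mult_left_mono) (auto simp: algebra_simps)
        finally show ?thesis by simp
      qed
      have "cmod (P t) \<le> cmod (D t) / (2 * pi) + \<bar>b t\<bar> * cmod (u t)"
        unfolding Pform by (rule order.trans[OF norm_triangle_ineq]) (simp add: norm_mult norm_divide)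
      also have "\<dots> \<le> cmod (D t) + (A * (1 + Q) * (1 + t^2)) * cmod (u t)"
      proof -
        have "cmod (D t) * 1 \<le> cmod (D t) * (2 * pi)" using pi_ge_two by (intro mult_left_mono) auto
        hence "cmod (D t) / (2 * pi) \<le> cmod (D t)" by (simp add: divide_le_eq)
        moreover have "\<bar>b t\<bar> * cmod (u t) \<le> (A * (1 + Q) * (1 + t^2)) * cmod (u t)" using bb by (intro mult_right_mono) auto
        ultimately show ?thesis by linarith
      qed
      also have "\<dots> \<le> L * (1 + t^2) * (cmod (u t) + cmod (D t))"
      proof -
        have Lp: "1 * 1 \<le> L * (1 + t^2)" unfolding L_def using A0 Q_nonneg p1[of t] by (intro mult_mono) auto
        have h1: "1 * cmod (D t) \<le> (L * (1 + t^2)) * cmod (D t)" using Lp by (intro mult_right_mono) auto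
        have "A * (1 + Q) \<le> L" unfolding L_def by simp
        hence h2: "A * (1 + Q) * (1 + t^2) \<le> L * (1 + t^2)" by (intro mult_right_mono) auto
        have h3: "(A * (1 + Q) * (1 + t^2)) * cmod (u t) \<le> (L * (1 + t^2)) * cmod (u t)" by (rule mult_right_mono[OF h2]) simp
        have "L * (1 + t^2) * (cmod (u t) + cmod (D t)) = (L * (1 + t^2)) * cmod (u t) + (L * (1 + t^2)) * cmod (D t)"
          by (simp add: algebra_simps)
        thus ?thesis using h1 h3 by linarith
      qed
      finally have "cmod (P t) \<le> L * (1 + t^2) * (cmod (u t) + cmod (D t))" .
      thus ?thesis unfolding Hh_def by (intro decay_aux[OF p1 _ cs L0]) auto
    qed
  qed
  define LW where "LW = 2 + 2 * R + Q"
  have LW0: "LW \<ge> 0" unfolding LW_def using R1 Q_nonneg by simp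
  show "integrable lborel (\<lambda>t. (W t)^2 * U t)"
  proof (rule integrable_decay)
    show "continuous_on UNIV (\<lambda>t. (W t)^2 * U t)" unfolding U_def by (intro continuous_intros cont_W cont_u)
    show "0 \<le> (W t)^2 * U t" for t using U0[of t] by simp
    show "(W t)^2 * U t \<le> (LW * M)^2 / (1 + t^2)" for t
    proof -
      have w0: "0 \<le> W t" unfolding W_eq using V1[of t] by (simp add: add_nonneg_nonneg)
      have "W t \<le> 1 + 2 * R + V t" unfolding W_eq using Xa by simp
      also have "\<dots> \<le> 1 + 2 * R + (1 + Q * (1 + t^2))" using Vle[of t] N_le[of t] by simp
      also have "\<dots> \<le> LW * (1 + t^2)" unfolding LW_def using p1[of t] R1 Q_nonneg
        by (simp add: algebra_simps)
      finally have "W t * cmod (u t) \<le> LW * (1 + t^2) * cmod (u t)" by (intro mult_right_mono) auto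
      hence "(W t * cmod (u t))^2 \<le> (LW * M)^2 / (1 + t^2)"
        by (intro decay_aux[OF p1 _ Mu LW0]) (use w0 in auto)
      thus ?thesis unfolding U_def by (simp add: power_mult_distrib)
    qed
  qed
qed

end


lemma lin_fin:
  fixes X Y u r v b3r g3h ke2 Gr T gkh gu gce cu1 Cu ch Ch G :: real
  assumes "X \<le> Y" "Y = 3 * u + 12 * r + 3 * v" "3 * v \<le> 48 * u + b3r + g3h - ke2"
    "12 * r + b3r = Gr" "Gr \<le> T" "T = gkh + gu - gce" "cu1 \<le> Cu" "cu1 = 51 * u + gu"
    "ch \<le> Ch" "ch = g3h + gkh" "G = Ch + Cu - gce - ke2"
  shows "X \<le> G"
  using assms by linarith

context fx begin

lemma final:
  "L2norm (\<lambda>t. complex_of_real (1 + jbr x1 powr (2*\<sigma>/(2*\<sigma>+1)) + jbr (x2 - t *\<^sub>R x1) powr (2*\<sigma>)) * u t)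
     \<le> sqrt (Cst \<sigma> a0) * (L2norm (Ptilde \<sigma> a w x1 x2 \<xi>1 \<xi>2 u) + L2norm u)"
proof -
  obtain E1 c1 where iE1: "integrable lborel E1" and zE1: "integral\<^sup>L lborel E1 = 0"
    and pB: "\<And>t. R^2 * U t \<le> K1 * Hh t + U t - c1 * E1 t" using B_est by blast
  obtain E2 where iE2: "integrable lborel E2" and zE2: "integral\<^sup>L lborel E2 = 0"
    and pC: "\<And>t. (V t)^2 * U t \<le> 16 * U t + \<beta> * R^2 * U t + \<gamma> * Hh t - (2/(pi*a0)) * E2 t" using C_est by blast
  define \<Gamma> where "\<Gamma> = 12 + 3 * \<beta>"
  have b0: "\<beta> \<ge> 0" unfolding \<beta>_def using a0 by (auto intro!: mult_nonneg_nonneg add_nonneg_nonneg)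
  have G0: "\<Gamma> \<ge> 0" unfolding \<Gamma>_def using b0 by simp
  define G where "G t = Cfin * (Hh t + U t) - (\<Gamma> * c1) * E1 t - (3 * (2/(pi*a0))) * E2 t" for t
  have pw: "(W t)^2 * U t \<le> G t" for t
  proof -
    have w1: "(W t)^2 * U t \<le> (3 + 12 * R^2 + 3 * (V t)^2) * U t" using W_sq U0 by (rule mult_right_mono)
    have w2: "(3 + 12 * R^2 + 3 * (V t)^2) * U t = 3 * U t + 12 * (R^2 * U t) + 3 * ((V t)^2 * U t)"
      by (simp add: algebra_simps)
    have c3: "3 * ((V t)^2 * U t) \<le> 48 * U t + 3 * \<beta> * (R^2 * U t) + 3 * \<gamma> * Hh t - (3 * (2/(pi*a0))) * E2 t"
    proof -
      have "3 * ((V t)^2 * U t) \<le> 3 * (16 * U t + \<beta> * R^2 * U t + \<gamma> * Hh t - (2/(pi*a0)) * E2 t)"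
        using pC[of t] by simp
      also have "\<dots> = 48 * U t + 3 * \<beta> * (R^2 * U t) + 3 * \<gamma> * Hh t - (3 * (2/(pi*a0))) * E2 t"
        by (simp only: algebra_simps)
      finally show ?thesis .
    qed
    have bG: "\<Gamma> * (R^2 * U t) \<le> \<Gamma> * (K1 * Hh t + U t - c1 * E1 t)" using pB[of t] G0 by (rule mult_left_mono)
    have bG2: "\<Gamma> * (K1 * Hh t + U t - c1 * E1 t) = (\<Gamma> * K1) * Hh t + \<Gamma> * U t - (\<Gamma> * c1) * E1 t"
      by (simp add: algebra_simps)
    have g12: "12 * (R^2 * U t) + 3 * \<beta> * (R^2 * U t) = \<Gamma> * (R^2 * U t)" unfolding \<Gamma>_def by (simp add: algebra_simps)
    have cf1: "(51 + \<Gamma>) * U t \<le> Cfin * U t" using coeffs(1) U0 unfolding \<Gamma>_def by (rule mult_right_mono)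
    have cf2: "(3 * \<gamma> + \<Gamma> * K1) * Hh t \<le> Cfin * Hh t" using coeffs(2) Hh0 unfolding \<Gamma>_def by (rule mult_right_mono)
    have e1: "(51 + \<Gamma>) * U t = 51 * U t + \<Gamma> * U t" by (simp add: algebra_simps)
    have e2: "(3 * \<gamma> + \<Gamma> * K1) * Hh t = 3 * \<gamma> * Hh t + (\<Gamma> * K1) * Hh t" by (simp add: algebra_simps)
    have e3: "G t = Cfin * Hh t + Cfin * U t - (\<Gamma> * c1) * E1 t - (3 * (2/(pi*a0))) * E2 t" unfolding G_def by (simp add: algebra_simps)
    show ?thesis by (rule lin_fin[OF w1 w2 c3 g12 bG bG2 cf1 e1 cf2 e2 e3])
  qed
  note ints = integrables
  have iG: "integrable lborel G" unfolding G_def[abs_def]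
    using ints iE1 iE2
    by (intro Bochner_Integration.integrable_diff Bochner_Integration.integrable_mult_right Bochner_Integration.integrable_add) auto
  have IG: "integral\<^sup>L lborel G = Cfin * (integral\<^sup>L lborel Hh + integral\<^sup>L lborel U)"
    unfolding G_def[abs_def] using ints iE1 iE2 zE1 zE2
    by (simp add: integral_diff integral_mult_right integral_add integrable_diff integrable_mult_right integrable_add)
  have mono: "integral\<^sup>L lborel (\<lambda>t. (W t)^2 * U t) \<le> integral\<^sup>L lborel G"
    by (rule integral_mono[OF ints(3) iG pw])
  have IH0: "integral\<^sup>L lborel Hh \<ge> 0" by (rule integral_nonneg_AE) (simp add: Hh0)
  have IU0: "integral\<^sup>L lborel U \<ge> 0" by (rule integral_nonneg_AE) (simp add: U0)
  have Cf0: "Cfin \<ge> 0" unfolding Cfin_def using Cst_pos[OF a0, of \<sigma>] by simp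
  have lhs: "L2norm (\<lambda>t. complex_of_real (1 + jbr x1 powr (2*\<sigma>/(2*\<sigma>+1)) + jbr (x2 - t *\<^sub>R x1) powr (2*\<sigma>)) * u t)
     = sqrt (integral\<^sup>L lborel (\<lambda>t. (W t)^2 * U t))"
    unfolding L2norm_def W_def[symmetric] U_def by (simp add: norm_mult power_mult_distrib)
  have rP: "L2norm (Ptilde \<sigma> a w x1 x2 \<xi>1 \<xi>2 u) = sqrt (integral\<^sup>L lborel Hh)"
    unfolding L2norm_def Hh_def P_def ..
  have ru: "L2norm u = sqrt (integral\<^sup>L lborel U)" unfolding L2norm_def U_def ..
  have "sqrt (integral\<^sup>L lborel (\<lambda>t. (W t)^2 * U t)) \<le> sqrt (Cfin * (integral\<^sup>L lborel Hh + integral\<^sup>L lborel U))"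
    using mono IG by simp
  also have "\<dots> = sqrt Cfin * sqrt (integral\<^sup>L lborel Hh + integral\<^sup>L lborel U)" by (simp add: real_sqrt_mult)
  also have "\<dots> \<le> sqrt Cfin * (sqrt (integral\<^sup>L lborel Hh) + sqrt (integral\<^sup>L lborel U))"
    by (intro mult_left_mono sqrt_add_le_add_sqrt IH0 IU0) (use Cf0 in simp)
  finally show ?thesis unfolding lhs rP ru Cfin_def .
qed

end

theorem lemma1:
  fixes \<sigma> :: real and a :: "real \<Rightarrow> real^'n \<Rightarrow> real^'n \<Rightarrow> real" and w :: "real^'n \<Rightarrow> real"
  assumes "0 < \<sigma>" "\<sigma> < 1"
    and "Cb_inf (\<lambda>(t::real, \<xi>::real^'n, \<eta>::real^'n). a t \<xi> \<eta>)"
    and "\<exists>a0>0. \<forall>t \<xi> \<eta>. a t \<xi> \<eta> \<ge> a0"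
    and "smooth_fun w"
    and "\<forall>x. 0 \<le> w x \<and> w x \<le> 1"
    and "\<forall>x. norm x \<ge> 2 \<longrightarrow> w x = 1"
    and "\<forall>x. norm x \<le> 1 \<longrightarrow> w x = 0"
  shows "\<exists>C>0. \<forall>u x1 x2 \<xi>1 \<xi>2. schwartz u \<longrightarrow>
     L2norm (\<lambda>t. complex_of_real (1 + jbr x1 powr (2*\<sigma>/(2*\<sigma>+1)) + jbr (x2 - t *\<^sub>R x1) powr (2*\<sigma>)) * u t)
       \<le> C * (L2norm (Ptilde \<sigma> a w x1 x2 \<xi>1 \<xi>2 u) + L2norm u)"
proof -
  obtain a0 where a0: "a0 > 0" and alo: "\<And>t \<xi> \<eta>. a t \<xi> \<eta> \<ge> a0" using assms(4) by blast
  define f where "f = (\<lambda>(t::real, \<xi>::real^'n, \<eta>::real^'n). a t \<xi> \<eta>)"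
  have sf: "smooth_fun f" and bfa: "\<forall>vs. set vs \<subseteq> Basis \<longrightarrow> bounded (range (iter_dderiv f vs))"
    using assms(3) unfolding Cb_inf_def f_def by auto
  have bf: "bounded (range f)" using bfa[rule_format, of "[]"] by simp
  have fc: "continuous_on UNIV f"
    using sf unfolding smooth_fun_def
    by (metis continuous_at_imp_continuous_on differentiable_imp_continuous_within empty_subsetI
        iter_dderiv.simps(1) list.set(1))
  obtain A where Af: "\<And>p. norm (f p) \<le> A" using bf by (auto simp: bounded_iff)
  have ahi: "\<bar>a t \<xi> \<eta>\<bar> \<le> A" for t \<xi> \<eta> using Af[of "(t, \<xi>, \<eta>)"] unfolding f_def by simp
  have wc: "continuous_on UNIV w"
    using assms(5) unfolding smooth_fun_def
    by (metis continuous_at_imp_continuous_on differentiable_imp_continuous_within empty_subsetI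
        iter_dderiv.simps(1) list.set(1))
  have ac: "continuous_on UNIV (\<lambda>t. a t \<xi>2 (\<xi>1 + t *\<^sub>R \<xi>2))" for \<xi>1 \<xi>2 :: "real^'n"
  proof -
    have "continuous_on UNIV (\<lambda>t. f (t, \<xi>2, \<xi>1 + t *\<^sub>R \<xi>2))"
      by (rule continuous_on_compose2[OF fc]) (auto intro!: continuous_intros)
    thus ?thesis unfolding f_def by simp
  qed
  show ?thesis
  proof (intro exI[of _ "sqrt (Cst \<sigma> a0)"] conjI allI impI)
    show "sqrt (Cst \<sigma> a0) > 0" using Cst_pos[OF a0] by simp
    fix u x1 x2 \<xi>1 \<xi>2 assume su: "schwartz u"
    have "fx \<sigma> a0 A a w u \<xi>1 \<xi>2"
      by unfold_locales (use assms(1,2,6) a0 alo ahi ac wc su in auto)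
    from fx.final[OF this, of x1 x2] show "L2norm (\<lambda>t. complex_of_real (1 + jbr x1 powr (2*\<sigma>/(2*\<sigma>+1)) + jbr (x2 - t *\<^sub>R x1) powr (2*\<sigma>)) * u t)
       \<le> sqrt (Cst \<sigma> a0) * (L2norm (Ptilde \<sigma> a w x1 x2 \<xi>1 \<xi>2 u) + L2norm u)" .
  qed
qed



end
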